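(* Fix $r>0$, $\sigma>0$ and $\varepsilon>0$. For each $P$ (the "uncorrelated points" model) consider labels $y^1,\dots,y^P$ i.i.d. $\mathcal{N}(0,\sigma^2)$ (points $\mathbf{x}^\mu\in\mathbb{R}^N$ with i.i.d. entries $\mathcal{N}(0,r^2/N)$, i.e. covariance tensor $\Sigma_{\mu0}^{\nu0}=r^2\delta_{\mu\nu}$ with $D=0$). For a label vector $\mathbf{y}\in\mathbb{R}^P$ define $\mathcal{A}(\mathbf{y})=\{\mathbf{w}\in\mathbb{R}^P: |r w^\mu-y^\mu|\le\varepsilon\ \text{for all }\mu\}$, its cone $\mathcal{A}(\mathbf{y})^+=\{\lambda\mathbf{w}:\mathbf{w}\in\mathcal{A}(\mathbf{y}),\lambda\ge0\}$, and the label-conditioned estimator $$\alpha_{\mathsf{mf}}(\varepsilon,P,\mathbf{y})^{-1}=\frac1P\,\mathbb{E}_{\mathbf{t}}\left[\min_{\mathbf{w}^+\in\mathcal{A}(\mathbf{y})^+}\|\mathbf{t}-\mathbf{w}^+\|^2\right],\quad \mathbf{t}\sim\mathcal{N}(0,I_P).$$ Then the capacity of this model, $\alpha^{-1}(\varepsilon,r,\sigma)=\lim_{P\to\infty}\mathbb{E}_{\mathbf{y}}\big[\alpha_{\mathsf{mf}}(\varepsilon,P,\mathbf{y})^{-1}\big]$, is given by $$\alpha^{-1}(\varepsilon,r,\sigma)=\min_{\tau\ge0}\,2\int_{b/a}^{\infty}\mathcal{D}z\,(az-b)^2,\qquad a=\sqrt{1+\frac{\sigma^2\tau^2}{r^2}},\quad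 b=\frac{\varepsilon\tau}{r},$$ where $\mathcal{D}z$ denotes the standard Gaussian measure.
   Context: $\mathcal{D}z=\frac{1}{\sqrt{2\pi}}e^{-z^2/2}dz$. *)

theory Defs
  imports "HOL-Probability.Probability"
begin

text \<open>Label/weight vectors in R^P are represented as extensional functions
  on the index set {..<P} (indices 0..P-1 play the role of mu = 1..P).\<close>

definition feasible_set :: "real \<Rightarrow> real \<Rightarrow> nat \<Rightarrow> (nat \<Rightarrow> real) \<Rightarrow> (nat \<Rightarrow> real) set" where
  "feasible_set r eps P y =
     {w \<in> {..<P} \<rightarrow>\<^sub>E (UNIV :: real set). \<forall>\<mu><P. \<bar>r * w \<mu> - y \<mu>\<bar> \<le> eps}"

definition feasible_cone :: "real \<Rightarrow> real \<Rightarrow> nat \<Rightarrow> (nat \<Rightarrow> real) \<Rightarrow> (nat \<Rightarrow> real) set" where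
  "feasible_cone r eps P y =
     {restrict (\<lambda>\<mu>. l * w \<mu>) {..<P} | l w. l \<ge> 0 \<and> w \<in> feasible_set r eps P y}"

text \<open>Squared Euclidean distance from t to the cone (the min is attained; written as Inf).\<close>
definition sqdist_cone :: "real \<Rightarrow> real \<Rightarrow> nat \<Rightarrow> (nat \<Rightarrow> real) \<Rightarrow> (nat \<Rightarrow> real) \<Rightarrow> real" where
  "sqdist_cone r eps P y t =
     (INF w \<in> feasible_cone r eps P y. \<Sum>\<mu><P. (t \<mu> - w \<mu>)\<^sup>2)"

definition gauss_vec :: "nat \<Rightarrow> real \<Rightarrow> (nat \<Rightarrow> real) measure" where
  "gauss_vec P s = PiM {..<P} (\<lambda>_. density lborel (normal_density 0 s))"

definition alpha_mf_inv :: "real \<Rightarrow> real \<Rightarrow> nat \<Rightarrow> (nat \<Rightarrow> real) \<Rightarrow> real" where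
  "alpha_mf_inv r eps P y =
     (1 / real P) * (\<integral>t. sqdist_cone r eps P y t \<partial>gauss_vec P 1)"

definition mean_alpha_inv :: "real \<Rightarrow> real \<Rightarrow> real \<Rightarrow> nat \<Rightarrow> real" where
  "mean_alpha_inv r sg eps P = (\<integral>y. alpha_mf_inv r eps P y \<partial>gauss_vec P sg)"

definition replica_fun :: "real \<Rightarrow> real \<Rightarrow> real \<Rightarrow> real \<Rightarrow> real" where
  "replica_fun r sg eps tau =
     (let a = sqrt (1 + sg\<^sup>2 * tau\<^sup>2 / r\<^sup>2); b = eps * tau / r in
      2 * (LINT z:{b / a..}|lborel. std_normal_density z * (a * z - b)\<^sup>2))"

end

theory Submission
  imports Defs
begin


definition hh :: "real \<Rightarrow> real \<Rightarrow> real \<Rightarrow> real \<Rightarrow> real" where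
  "hh e t y k = max 0 (max (t - k * (y + e)) (k * (y - e) - t))"

definition gg :: "real \<Rightarrow> real \<Rightarrow> real \<Rightarrow> real \<Rightarrow> real" where
  "gg e t y k = (hh e t y k)\<^sup>2"

definition SS :: "real \<Rightarrow> nat \<Rightarrow> (nat \<Rightarrow> real) \<Rightarrow> (nat \<Rightarrow> real) \<Rightarrow> real \<Rightarrow> real" where
  "SS e P y t k = (\<Sum>\<mu><P. gg e (t \<mu>) (y \<mu>) k)"

lemma hh_nonneg: "0 \<le> hh e t y k" by (simp add: hh_def)
lemma gg_nonneg: "0 \<le> gg e t y k" by (simp add: gg_def)
lemma SS_nonneg: "0 \<le> SS e P y t k" by (simp add: SS_def sum_nonneg gg_nonneg)

lemma gg_le:
  assumes "\<bar>v - k * y\<bar> \<le> k * e"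
  shows "gg e t y k \<le> (t - v)\<^sup>2"
proof -
  have "hh e t y k \<le> \<bar>t - v\<bar>" using assms unfolding hh_def by (auto simp: algebra_simps abs_le_iff)
  then show ?thesis unfolding gg_def
    by (metis abs_ge_zero hh_nonneg power2_abs power_mono)
qed

lemma gg_clamp:
  assumes "0 \<le> k" "0 < e"
  shows "gg e t y k = (t - max (k * (y - e)) (min (k * (y + e)) t))\<^sup>2"
proof -
  have le: "k * (y - e) \<le> k * (y + e)" using assms by (intro mult_left_mono) auto
  show ?thesis unfolding gg_def hh_def
    using le by (cases "t \<le> k * (y - e)"; cases "t \<le> k * (y + e)") (auto simp: max_def min_def power2_commute algebra_simps)
qed

lemma SS_0: "SS e P y t 0 = (\<Sum>\<mu><P. (t \<mu>)\<^sup>2)"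
  unfolding SS_def gg_def hh_def by (intro sum.cong) (auto simp: max_def power2_eq_square)

lemma sqdist_eq:
  assumes r: "r > 0" and e: "e > 0"
  shows "sqdist_cone r e P y t = (INF k\<in>{0..}. SS e P y t k)"
proof -
  let ?C = "feasible_cone r e P y"
  let ?D = "\<lambda>w. \<Sum>\<mu><P. (t \<mu> - w \<mu>)\<^sup>2"
  have fe: "restrict (\<lambda>\<mu>. y \<mu> / r) {..<P} \<in> feasible_set r e P y"
    using r e by (auto simp: feasible_set_def)
  have Cne: "?C \<noteq> {}" unfolding feasible_cone_def using fe by blast
  have A: "\<exists>k\<in>{0..}. SS e P y t k \<le> ?D w" if "w \<in> ?C" for w
  proof -
    from that obtain l w' where w: "w = restrict (\<lambda>\<mu>. l * w' \<mu>) {..<P}" "l \<ge> 0" "w' \<in> feasible_set r e P y"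
      unfolding feasible_cone_def by blast
    have "SS e P y t (l / r) \<le> ?D w" unfolding SS_def
    proof (rule sum_mono)
      fix \<mu> assume "\<mu> \<in> {..<P}"
      then have "\<bar>r * w' \<mu> - y \<mu>\<bar> \<le> e" using w(3) by (auto simp: feasible_set_def)
      then have "\<bar>l * w' \<mu> - l / r * y \<mu>\<bar> \<le> l / r * e"
      proof -
        have "\<bar>l * w' \<mu> - l / r * y \<mu>\<bar> = l / r * \<bar>r * w' \<mu> - y \<mu>\<bar>"
          using r w(2) by (simp add: field_simps) (metis abs_mult abs_of_nonneg right_diff_distrib)
        also have "\<dots> \<le> l / r * e" using \<open>\<bar>r * w' \<mu> - y \<mu>\<bar> \<le> e\<close> r w(2)
          by (intro mult_left_mono) auto
        finally show ?thesis .
      qed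
      then show "gg e (t \<mu>) (y \<mu>) (l / r) \<le> (t \<mu> - w \<mu>)\<^sup>2"
        using \<open>\<mu> \<in> {..<P}\<close> w(1) by (auto intro: gg_le)
    qed
    then show ?thesis using w(2) r by (intro bexI[of _ "l/r"]) auto
  qed
  have B: "\<exists>w\<in>?C. ?D w \<le> SS e P y t k" if "k \<in> {0..}" for k
  proof -
    have k: "k \<ge> 0" using that by simp
    define v where "v = (\<lambda>\<mu>. max (k * (y \<mu> - e)) (min (k * (y \<mu> + e)) (t \<mu>)))"
    define w' where "w' = restrict (\<lambda>\<mu>. if k = 0 then y \<mu> / r else v \<mu> / (r * k)) {..<P}"
    have w'f: "w' \<in> feasible_set r e P y"
    proof -
      have "\<bar>r * w' \<mu> - y \<mu>\<bar> \<le> e" if "\<mu> < P" for \<mu>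
      proof (cases "k = 0")
        case True then show ?thesis using that r e by (simp add: w'_def)
      next
        case False
        then have kp: "k > 0" using k by simp
        have "\<bar>v \<mu> - k * y \<mu>\<bar> \<le> k * e" unfolding v_def using kp e
          by (auto simp: max_def min_def algebra_simps abs_le_iff)
        moreover have "r * w' \<mu> - y \<mu> = (v \<mu> - k * y \<mu>) / k"
          using that kp r by (simp add: w'_def field_simps)
        ultimately show ?thesis using kp
          by (simp add: abs_divide divide_le_eq mult.commute)
      qed
      then show ?thesis unfolding feasible_set_def w'_def by auto
    qed
    define w where "w = restrict (\<lambda>\<mu>. (r * k) * w' \<mu>) {..<P}"
    have wC: "w \<in> ?C" unfolding feasible_cone_def w_def using w'f r k
      by (intro CollectI exI[of _ "r * k"] exI[of _ w']) auto
    have "?D w = SS e P y t k" unfolding SS_def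
    proof (rule sum.cong[OF refl])
      fix \<mu> assume "\<mu> \<in> {..<P}"
      then have "w \<mu> = v \<mu>" using r e k
        by (cases "k = 0") (auto simp: w_def w'_def v_def)
      then show "(t \<mu> - w \<mu>)\<^sup>2 = gg e (t \<mu>) (y \<mu>) k"
        using gg_clamp[OF k e] by (simp add: v_def)
    qed
    then show ?thesis using wC by (intro bexI[of _ w]) auto
  qed
  have bd1: "bdd_below (SS e P y t ` {0..})" by (rule bdd_belowI[of _ 0]) (auto simp: SS_nonneg)
  have bd2: "bdd_below (?D ` ?C)" by (rule bdd_belowI[of _ 0]) (auto intro: sum_nonneg)
  have "(INF k\<in>{0..}. SS e P y t k) \<le> (INF w\<in>?C. ?D w)"
    by (rule cINF_mono[OF Cne bd1]) (use A in auto)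
  moreover have "(INF w\<in>?C. ?D w) \<le> (INF k\<in>{0..}. SS e P y t k)"
    by (rule cINF_mono) (use B bd2 in auto)
  ultimately show ?thesis unfolding sqdist_cone_def by linarith
qed


definition cvx3 :: "(real \<Rightarrow> real) \<Rightarrow> bool" where
  "cvx3 G \<longleftrightarrow> (\<forall>a b c. 0 \<le> a \<longrightarrow> a < b \<longrightarrow> b < c \<longrightarrow> (c - a) * G b \<le> (c - b) * G a + (b - a) * G c)"

lemma cvx3D: "cvx3 G \<Longrightarrow> 0 \<le> a \<Longrightarrow> a < b \<Longrightarrow> b < c \<Longrightarrow> (c - a) * G b \<le> (c - b) * G a + (b - a) * G c"
  unfolding cvx3_def by blast

lemma hh_cvx: "cvx3 (hh e t y)"
  unfolding cvx3_def
proof (intro allI impI)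
  fix a b c :: real assume h: "0 \<le> a" "a < b" "b < c"
  have aff: "(c - a) * (p + q * b) = (c - b) * (p + q * a) + (b - a) * (p + q * c)" for p q
    by (simp add: algebra_simps)
  have u: "0 \<le> c - b" "0 \<le> b - a" using h by auto
  let ?A = "\<lambda>k. t - k * (y + e)" let ?B = "\<lambda>k. k * (y - e) - t"
  have 1: "(c - a) * ?A b \<le> (c - b) * hh e t y a + (b - a) * hh e t y c"
  proof -
    have "(c - a) * ?A b = (c - b) * ?A a + (b - a) * ?A c" using aff[of t "-(y+e)"] by (simp add: algebra_simps)
    also have "\<dots> \<le> (c - b) * hh e t y a + (b - a) * hh e t y c"
      using u by (intro add_mono mult_left_mono) (auto simp: hh_def)
    finally show ?thesis .
  qed
  have 2: "(c - a) * ?B b \<le> (c - b) * hh e t y a + (b - a) * hh e t y c"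
  proof -
    have "(c - a) * ?B b = (c - b) * ?B a + (b - a) * ?B c" using aff[of "-t" "(y-e)"] by (simp add: algebra_simps)
    also have "\<dots> \<le> (c - b) * hh e t y a + (b - a) * hh e t y c"
      using u by (intro add_mono mult_left_mono) (auto simp: hh_def)
    finally show ?thesis .
  qed
  have 3: "(c - a) * 0 \<le> (c - b) * hh e t y a + (b - a) * hh e t y c"
    using u by (simp add: hh_nonneg)
  show "(c - a) * hh e t y b \<le> (c - b) * hh e t y a + (b - a) * hh e t y c"
    using 1 2 3 unfolding hh_def[of e t y b] by (simp add: max_def)
qed

lemma sq_cvx3:
  assumes "cvx3 G" "\<And>k. 0 \<le> G k"
  shows "cvx3 (\<lambda>k. (G k)\<^sup>2)"
  unfolding cvx3_def
proof (intro allI impI)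
  fix a b c :: real assume h: "0 \<le> a" "a < b" "b < c"
  define u where "u = c - b" define v where "v = b - a"
  have u: "u > 0" "v > 0" using h by (auto simp: u_def v_def)
  have w: "c - a = u + v" by (simp add: u_def v_def)
  have c: "(u + v) * G b \<le> u * G a + v * G c" using cvx3D[OF assms(1) h] by (simp add: u_def v_def)
  have gb: "0 \<le> G b" by (rule assms(2))
  have "((u + v) * G b)^2 \<le> (u * G a + v * G c)^2"
    using c gb u by (intro power_mono) auto
  also have "\<dots> \<le> (u + v) * (u * (G a)\<^sup>2 + v * (G c)\<^sup>2)"
  proof -
    have "(u + v) * (u * (G a)\<^sup>2 + v * (G c)\<^sup>2) - (u * G a + v * G c)^2 = u * v * (G a - G c)^2"
      by (simp add: power2_eq_square algebra_simps)
    moreover have "u * v * (G a - G c)^2 \<ge> 0" using u by simp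
    ultimately show ?thesis by linarith
  qed
  finally have "(u + v) * ((u + v) * (G b)\<^sup>2) \<le> (u + v) * (u * (G a)\<^sup>2 + v * (G c)\<^sup>2)"
    by (simp add: power2_eq_square algebra_simps)
  then have "(u + v) * (G b)\<^sup>2 \<le> u * (G a)\<^sup>2 + v * (G c)\<^sup>2"
    using u by (simp add: mult_le_cancel_left)
  then show "(c - a) * (G b)\<^sup>2 \<le> (c - b) * (G a)\<^sup>2 + (b - a) * (G c)\<^sup>2"
    by (simp add: u_def v_def)
qed

lemma gg_cvx: "cvx3 (gg e t y)"
  using sq_cvx3[OF hh_cvx hh_nonneg] unfolding gg_def[abs_def] by simp

lemma sum_cvx3:
  assumes H: "\<And>i. i \<in> I \<Longrightarrow> cvx3 (G i)"
  shows "cvx3 (\<lambda>k. \<Sum>i\<in>I. G i k)"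
  unfolding cvx3_def
proof (intro allI impI)
  fix a b c :: real assume h: "0 \<le> a" "a < b" "b < c"
  have "(c - a) * (\<Sum>i\<in>I. G i b) = (\<Sum>i\<in>I. (c - a) * G i b)" by (simp add: sum_distrib_left)
  also have "\<dots> \<le> (\<Sum>i\<in>I. (c - b) * G i a + (b - a) * G i c)"
    by (intro sum_mono cvx3D[OF H h]) auto
  also have "\<dots> = (c - b) * (\<Sum>i\<in>I. G i a) + (b - a) * (\<Sum>i\<in>I. G i c)"
    by (simp add: sum.distrib sum_distrib_left)
  finally show "(c - a) * (\<Sum>i\<in>I. G i b) \<le> (c - b) * (\<Sum>i\<in>I. G i a) + (b - a) * (\<Sum>i\<in>I. G i c)" .
qed

lemma cmul_cvx3: "cvx3 G \<Longrightarrow> 0 \<le> q \<Longrightarrow> cvx3 (\<lambda>k. q * G k)"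
  unfolding cvx3_def
proof (intro allI impI)
  fix a b c :: real assume H: "\<forall>a b c. 0 \<le> a \<longrightarrow> a < b \<longrightarrow> b < c \<longrightarrow> (c - a) * G b \<le> (c - b) * G a + (b - a) * G c"
    and q: "0 \<le> q" and h: "0 \<le> a" "a < b" "b < c"
  have "q * ((c - a) * G b) \<le> q * ((c - b) * G a + (b - a) * G c)" using H h q by (intro mult_left_mono) auto
  then show "(c - a) * (q * G b) \<le> (c - b) * (q * G a) + (b - a) * (q * G c)" by (simp add: algebra_simps)
qed

lemma SSn_cvx: "cvx3 (\<lambda>k. SS e P y t k / real P)"
proof -
  have "cvx3 (\<lambda>k. (1 / real P) * SS e P y t k)"
    unfolding SS_def by (intro cmul_cvx3 sum_cvx3 gg_cvx) auto
  then show ?thesis by simp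
qed

lemma grid_lb:
  assumes G: "cvx3 G" and h: "h > 0" and n: "n \<ge> 2" and end_: "G (real n * h) \<ge> G 0"
    and D: "\<And>i. i < n \<Longrightarrow> \<bar>G (real (Suc i) * h) - G (real i * h)\<bar> \<le> D"
    and m: "\<And>i. i \<le> n \<Longrightarrow> m \<le> G (real i * h)"
    and k: "k \<ge> 0"
  shows "G k \<ge> m - D"
proof -
  have D0: "D \<ge> 0" using D[of 0] n by linarith
  consider "k \<ge> real n * h" | "k < h" | "h \<le> k" "k < real n * h" by linarith
  then show ?thesis
  proof cases
    case 1
    show ?thesis
    proof (cases "k = real n * h")
      case True then show ?thesis using m[of n] D0 by auto
    next
      case False
      then have lt: "0 < real n * h" "real n * h < k" using 1 n h by auto
      have "(k - 0) * G (real n * h) \<le> (k - real n * h) * G 0 + (real n * h - 0) * G k"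
        by (rule cvx3D[OF G]) (use lt in auto)
      then have "real n * h * G (real n * h) + (k - real n * h) * (G (real n * h) - G 0) \<le> real n * h * G k"
        by (simp add: algebra_simps)
      moreover have "(k - real n * h) * (G (real n * h) - G 0) \<ge> 0" using lt end_ by auto
      ultimately have "real n * h * G (real n * h) \<le> real n * h * G k" by linarith
      then have "G (real n * h) \<le> G k" using lt by (simp add: mult_le_cancel_left)
      then show ?thesis using m[of n] D0 by auto
    qed
  next
    case 2
    show ?thesis
    proof (cases "k = 0")
      case True then show ?thesis using m[of 0] D0 by auto
    next
      case False
      then have lt: "0 \<le> k" "k < h" "h < 2 * h" using k 2 h by auto
      have "(2 * h - k) * G h \<le> (2 * h - h) * G k + (h - k) * G (2 * h)"
        by (rule cvx3D[OF G]) (use lt in auto)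
      then have "h * G h + (h - k) * (G h - G (2 * h)) \<le> h * G k"
        by (simp add: algebra_simps)
      moreover have "(h - k) * (G h - G (2 * h)) \<ge> (h - k) * (- D)"
        using D[of 1] n lt by (intro mult_left_mono) (auto simp: abs_le_iff)
      moreover have "(h - k) * (- D) \<ge> h * (- D)" using lt D0 by (simp add: algebra_simps mult_right_mono)
      ultimately have "h * (G h - D) \<le> h * G k" by (simp add: algebra_simps)
      then have "G h - D \<le> G k" using h by (simp add: mult_le_cancel_left)
      then show ?thesis using m[of 1] n by auto
    qed
  next
    case 3
    define i where "i = nat \<lfloor>k / h\<rfloor>"
    have fl: "real i * h \<le> k" "k < real (Suc i) * h"
    proof -
      have "k / h \<ge> 0" using k h by simp
      then have ri: "real i = of_int \<lfloor>k / h\<rfloor>" by (simp add: i_def)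
      have a: "of_int \<lfloor>k / h\<rfloor> \<le> k / h" and b: "k / h < of_int \<lfloor>k / h\<rfloor> + 1" by linarith+
      have "of_int \<lfloor>k / h\<rfloor> * h \<le> k" using a h by (simp add: le_divide_eq)
      moreover have "k < (of_int \<lfloor>k / h\<rfloor> + 1) * h"
        using mult_strict_right_mono[OF b h] h by simp
      ultimately show "real i * h \<le> k" "k < real (Suc i) * h" using ri by (auto simp: algebra_simps)
    qed
    have i1: "i \<ge> 1"
    proof (rule ccontr)
      assume "\<not> i \<ge> 1" then have "i = 0" by simp
      then show False using fl 3 by simp
    qed
    have in_: "i < n"
    proof (rule ccontr)
      assume "\<not> i < n" then have "real n * h \<le> real i * h" using h by simp
      then show False using fl 3 by simp
    qed
    show ?thesis
    proof (cases "k = real i * h")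
      case True then show ?thesis using m[of i] in_ D0 by auto
    next
      case False
      obtain j where j: "i = Suc j" using i1 by (cases i) auto
      have lt: "0 \<le> real j * h" "real j * h < real i * h" "real i * h < k"
        using fl False h j by auto
      have c3: "(k - real j * h) * G (real i * h) \<le> (k - real i * h) * G (real j * h) + (real i * h - real j * h) * G k"
        by (rule cvx3D[OF G]) (use lt in auto)
      have e1: "real i * h - real j * h = h" by (simp add: j algebra_simps)
      have e2: "k - real j * h = h + (k - real i * h)" by (simp add: j algebra_simps)
      have "h * G (real i * h) + (k - real i * h) * (G (real i * h) - G (real j * h)) \<le> h * G k"
      proof -
        define x where "x = real i * h" define x' where "x' = real j * h"
        define Gi where "Gi = G x" define Gj where "Gj = G x'"
        have "(h + (k - x)) * Gi \<le> (k - x) * Gj + h * G k"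
          using c3 e1 e2 unfolding x_def[symmetric] x'_def[symmetric] Gi_def Gj_def by simp
        then show ?thesis unfolding x_def[symmetric] x'_def[symmetric] Gi_def[symmetric] Gj_def[symmetric]
          by (simp add: algebra_simps)
      qed
      moreover have "(k - real i * h) * (G (real i * h) - G (real j * h)) \<ge> (k - real i * h) * (- D)"
        using D[of j] j in_ lt by (intro mult_left_mono) (auto simp: abs_le_iff)
      moreover have "(k - real i * h) * (- D) \<ge> h * (- D)" using lt fl D0 j
        by (intro mult_right_mono_neg) (auto simp: algebra_simps)
      ultimately have "h * (G (real i * h) - D) \<le> h * G k" by (simp add: algebra_simps)
      then have "G (real i * h) - D \<le> G k" using h by (simp add: mult_le_cancel_left)
      then show ?thesis using m[of i] in_ by auto
    qed
  qed
qed


definition NN :: "real \<Rightarrow> real measure" where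
  "NN s = density lborel (normal_density 0 s)"

lemma gauss_vec_NN: "gauss_vec P s = PiM {..<P} (\<lambda>_. NN s)"
  by (simp add: gauss_vec_def NN_def)

lemma prob_NN: "s > 0 \<Longrightarrow> prob_space (NN s)"
  unfolding NN_def by (rule prob_space_normal_density)

lemma sets_NN[measurable_cong, simp]: "sets (NN s) = sets borel"
  by (simp add: NN_def)

lemma space_NN[simp]: "space (NN s) = UNIV"
  by (simp add: NN_def)

lemma measurable_NN1[simp]: "measurable (NN s) M = measurable borel M"
  by (rule measurable_cong_sets) auto

lemma integrable_NN_iff:
  fixes f :: "real \<Rightarrow> real"
  assumes [measurable]: "f \<in> borel_measurable borel"
  shows "integrable (NN s) f \<longleftrightarrow> integrable lborel (\<lambda>x. normal_density 0 s x * f x)"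
  unfolding NN_def by (subst integrable_density) auto

lemma integral_NN:
  fixes f :: "real \<Rightarrow> real"
  assumes [measurable]: "f \<in> borel_measurable borel"
  shows "integral\<^sup>L (NN s) f = (\<integral>x. normal_density 0 s x * f x \<partial>lborel)"
  unfolding NN_def by (subst integral_density) auto

lemma integrable_NN_growth:
  fixes f :: "real \<Rightarrow> real"
  assumes s: "s > 0" and [measurable]: "f \<in> borel_measurable borel"
    and b: "\<And>x. \<bar>f x\<bar> \<le> A * (1 + x ^ 4)"
  shows "integrable (NN s) f"
proof -
  have i1: "integrable lborel (\<lambda>x. normal_density 0 s x * (x - 0) ^ 4)"
    by (rule integrable_normal_moment[OF s])
  have "integrable lborel (\<lambda>x. A * (normal_density 0 s x + normal_density 0 s x * x ^ 4))"
    using i1 s by (intro integrable_mult_right Bochner_Integration.integrable_add) auto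
  then have "integrable (NN s) (\<lambda>x. A * (1 + x ^ 4))"
    by (subst integrable_NN_iff) (auto simp: algebra_simps)
  then show ?thesis
    by (rule Bochner_Integration.integrable_bound) (use b in \<open>auto intro: order_trans[OF _ abs_ge_self]\<close>)
qed

lemma NN_moment2: "s > 0 \<Longrightarrow> (\<integral>x. x\<^sup>2 \<partial>NN s) = s\<^sup>2"
proof -
  assume s: "s > 0"
  have "has_bochner_integral lborel (\<lambda>x. normal_density 0 s x * (x - 0) ^ (2 * 1)) (fact (2 * 1) / ((2 / s\<^sup>2)^1 * fact 1))"
    by (rule normal_moment_even[OF s])
  then have "(\<integral>x. normal_density 0 s x * x\<^sup>2 \<partial>lborel) = s\<^sup>2"
    using s by (auto dest!: has_bochner_integral_integral_eq simp: power2_eq_square)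
  then show ?thesis by (subst integral_NN) auto
qed

lemma NN_moment4: "s > 0 \<Longrightarrow> (\<integral>x. x ^ 4 \<partial>NN s) = 3 * s ^ 4"
proof -
  assume s: "s > 0"
  have "has_bochner_integral lborel (\<lambda>x. normal_density 0 s x * (x - 0) ^ (2 * 2)) (fact (2 * 2) / ((2 / s\<^sup>2)^2 * fact 2))"
    by (rule normal_moment_even[OF s])
  moreover have "(fact (2 * 2) / ((2 / s\<^sup>2)^2 * fact 2) :: real) = 3 * s ^ 4"
    using s by (simp add: fact_numeral power2_eq_square field_simps eval_nat_numeral)
  ultimately have "(\<integral>x. normal_density 0 s x * x ^ 4 \<partial>lborel) = 3 * s ^ 4"
    by (auto dest!: has_bochner_integral_integral_eq)
  then show ?thesis by (subst integral_NN) auto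
qed

lemma PiM_comp:
  fixes f :: "real \<Rightarrow> real"
  assumes M: "prob_space (NN s)" and mu: "\<mu> \<in> I" and [measurable]: "f \<in> borel_measurable borel"
  shows "integrable (PiM I (\<lambda>_. NN s)) (\<lambda>x. f (x \<mu>)) \<longleftrightarrow> integrable (NN s) f"
    and "(\<integral>x. f (x \<mu>) \<partial>PiM I (\<lambda>_. NN s)) = integral\<^sup>L (NN s) f"
proof -
  have d: "distr (PiM I (\<lambda>_. NN s)) (NN s) (\<lambda>\<omega>. \<omega> \<mu>) = NN s"
    by (rule distr_PiM_component) (use M mu in auto)
  have m: "(\<lambda>\<omega>. \<omega> \<mu>) \<in> measurable (PiM I (\<lambda>_. NN s)) (NN s)"
    using mu by (rule measurable_component_singleton)
  show "integrable (PiM I (\<lambda>_. NN s)) (\<lambda>x. f (x \<mu>)) \<longleftrightarrow> integrable (NN s) f"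
    using integrable_distr_eq[OF m, of f] d by simp
  show "(\<integral>x. f (x \<mu>) \<partial>PiM I (\<lambda>_. NN s)) = integral\<^sup>L (NN s) f"
    using integral_distr[OF m, of f] d by simp
qed

lemma PiM_comp2:
  fixes f h :: "real \<Rightarrow> real"
  assumes s: "s > 0" and mu: "\<mu> \<in> I" "\<nu> \<in> I" "\<mu> \<noteq> \<nu>" "finite I"
    and [measurable]: "f \<in> borel_measurable borel" "h \<in> borel_measurable borel"
    and fi: "integrable (NN s) f" and hi: "integrable (NN s) h"
  shows "integrable (PiM I (\<lambda>_. NN s)) (\<lambda>x. f (x \<mu>) * h (x \<nu>))"
    and "(\<integral>x. f (x \<mu>) * h (x \<nu>) \<partial>PiM I (\<lambda>_. NN s)) = integral\<^sup>L (NN s) f * integral\<^sup>L (NN s) h"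
proof -
  interpret prob_space "NN s" by (rule prob_NN[OF s])
  interpret PS: product_sigma_finite "\<lambda>_. NN s"
    by (simp add: product_sigma_finite_def sigma_finite_measure_axioms)
  define F where "F = (\<lambda>i. if i = \<mu> then f else if i = \<nu> then h else (\<lambda>_. 1::real))"
  have Fi: "integrable (NN s) (F i)" for i by (auto simp: F_def fi hi)
  have eq: "(\<Prod>i\<in>I. F i (x i)) = f (x \<mu>) * h (x \<nu>)" for x
  proof -
    have "(\<Prod>i\<in>I. F i (x i)) = F \<mu> (x \<mu>) * (\<Prod>i\<in>I - {\<mu>}. F i (x i))"
      using mu by (simp add: prod.remove)
    also have "(\<Prod>i\<in>I - {\<mu>}. F i (x i)) = F \<nu> (x \<nu>) * (\<Prod>i\<in>I - {\<mu>} - {\<nu>}. F i (x i))"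
      using prod.remove[of "I - {\<mu>}" \<nu> "\<lambda>i. F i (x i)"] mu by simp
    also have "(\<Prod>i\<in>I - {\<mu>} - {\<nu>}. F i (x i)) = 1"
      by (intro prod.neutral) (auto simp: F_def)
    finally show ?thesis using mu by (simp add: F_def)
  qed
  have "integrable (PiM I (\<lambda>_. NN s)) (\<lambda>x. \<Prod>i\<in>I. F i (x i))"
    by (rule PS.product_integrable_prod) (use mu Fi in auto)
  then show "integrable (PiM I (\<lambda>_. NN s)) (\<lambda>x. f (x \<mu>) * h (x \<nu>))" by (simp add: eq)
  have "(\<integral>x. (\<Prod>i\<in>I. F i (x i)) \<partial>PiM I (\<lambda>_. NN s)) = (\<Prod>i\<in>I. integral\<^sup>L (NN s) (F i))"
    by (rule PS.product_integral_prod) (use mu Fi in auto)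
  also have "(\<Prod>i\<in>I. integral\<^sup>L (NN s) (F i)) = integral\<^sup>L (NN s) f * integral\<^sup>L (NN s) h"
  proof -
    have "(\<Prod>i\<in>I. integral\<^sup>L (NN s) (F i)) = integral\<^sup>L (NN s) (F \<mu>) * (\<Prod>i\<in>I - {\<mu>}. integral\<^sup>L (NN s) (F i))"
      using mu by (simp add: prod.remove)
    also have "(\<Prod>i\<in>I - {\<mu>}. integral\<^sup>L (NN s) (F i)) = integral\<^sup>L (NN s) (F \<nu>) * (\<Prod>i\<in>I - {\<mu>} - {\<nu>}. integral\<^sup>L (NN s) (F i))"
      using prod.remove[of "I - {\<mu>}" \<nu> "\<lambda>i. integral\<^sup>L (NN s) (F i)"] mu by simp
    also have "(\<Prod>i\<in>I - {\<mu>} - {\<nu>}. integral\<^sup>L (NN s) (F i)) = 1"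
      using prob_space by (intro prod.neutral) (auto simp: F_def)
    finally show ?thesis using mu by (simp add: F_def)
  qed
  finally show "(\<integral>x. f (x \<mu>) * h (x \<nu>) \<partial>PiM I (\<lambda>_. NN s)) = integral\<^sup>L (NN s) f * integral\<^sup>L (NN s) h"
    by (simp add: eq)
qed

lemma PiM_sq_sum:
  fixes f :: "nat \<Rightarrow> real \<Rightarrow> real"
  assumes s: "s > 0" and I: "finite I"
    and [measurable]: "\<And>\<mu>. f \<mu> \<in> borel_measurable borel"
    and fi: "\<And>\<mu>. \<mu> \<in> I \<Longrightarrow> integrable (NN s) (f \<mu>)"
    and fi2: "\<And>\<mu>. \<mu> \<in> I \<Longrightarrow> integrable (NN s) (\<lambda>x. (f \<mu> x)\<^sup>2)"
  shows "integrable (PiM I (\<lambda>_. NN s)) (\<lambda>x. (\<Sum>\<mu>\<in>I. f \<mu> (x \<mu>))\<^sup>2)"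
    and "(\<integral>x. (\<Sum>\<mu>\<in>I. f \<mu> (x \<mu>))\<^sup>2 \<partial>PiM I (\<lambda>_. NN s)) =
           (\<Sum>\<mu>\<in>I. integral\<^sup>L (NN s) (\<lambda>x. (f \<mu> x)\<^sup>2)) +
           (\<Sum>\<mu>\<in>I. \<Sum>\<nu>\<in>I - {\<mu>}. integral\<^sup>L (NN s) (f \<mu>) * integral\<^sup>L (NN s) (f \<nu>))"
proof -
  have P: "prob_space (NN s)" by (rule prob_NN[OF s])
  have sq: "(\<Sum>\<mu>\<in>I. f \<mu> (x \<mu>))\<^sup>2 = (\<Sum>\<mu>\<in>I. (f \<mu> (x \<mu>))\<^sup>2) + (\<Sum>\<mu>\<in>I. \<Sum>\<nu>\<in>I - {\<mu>}. f \<mu> (x \<mu>) * f \<nu> (x \<nu>))" for x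
  proof -
    have "(\<Sum>\<mu>\<in>I. f \<mu> (x \<mu>))\<^sup>2 = (\<Sum>\<mu>\<in>I. \<Sum>\<nu>\<in>I. f \<mu> (x \<mu>) * f \<nu> (x \<nu>))"
      by (simp add: power2_eq_square sum_product)
    also have "\<dots> = (\<Sum>\<mu>\<in>I. (f \<mu> (x \<mu>))\<^sup>2 + (\<Sum>\<nu>\<in>I - {\<mu>}. f \<mu> (x \<mu>) * f \<nu> (x \<nu>)))"
      by (intro sum.cong refl) (simp add: I sum.remove power2_eq_square)
    finally show ?thesis by (simp add: sum.distrib)
  qed
  have i1: "integrable (PiM I (\<lambda>_. NN s)) (\<lambda>x. (f \<mu> (x \<mu>))\<^sup>2)" if "\<mu> \<in> I" for \<mu>
    using PiM_comp(1)[OF P that, of "\<lambda>x. (f \<mu> x)\<^sup>2"] fi2[OF that] by simp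
  have i2: "integrable (PiM I (\<lambda>_. NN s)) (\<lambda>x. f \<mu> (x \<mu>) * f \<nu> (x \<nu>))" if "\<mu> \<in> I" "\<nu> \<in> I - {\<mu>}" for \<mu> \<nu>
    using PiM_comp2(1)[OF s, of \<mu> I \<nu> "f \<mu>" "f \<nu>"] that I fi by auto
  show "integrable (PiM I (\<lambda>_. NN s)) (\<lambda>x. (\<Sum>\<mu>\<in>I. f \<mu> (x \<mu>))\<^sup>2)"
    unfolding sq using i1 i2 by (intro Bochner_Integration.integrable_add Bochner_Integration.integrable_sum) auto
  have "(\<integral>x. (\<Sum>\<mu>\<in>I. f \<mu> (x \<mu>))\<^sup>2 \<partial>PiM I (\<lambda>_. NN s)) =
      (\<Sum>\<mu>\<in>I. \<integral>x. (f \<mu> (x \<mu>))\<^sup>2 \<partial>PiM I (\<lambda>_. NN s)) + (\<Sum>\<mu>\<in>I. \<Sum>\<nu>\<in>I - {\<mu>}. \<integral>x. f \<mu> (x \<mu>) * f \<nu> (x \<nu>) \<partial>PiM I (\<lambda>_. NN s))"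
    unfolding sq using i1 i2
    apply (subst Bochner_Integration.integral_add)
      apply (auto intro!: Bochner_Integration.integrable_sum)[2]
    apply (subst Bochner_Integration.integral_sum, force)
    apply (subst Bochner_Integration.integral_sum, force intro!: Bochner_Integration.integrable_sum)
    apply (intro arg_cong2[where f="(+)"] sum.cong refl)
    apply (subst Bochner_Integration.integral_sum, force, rule refl)
    done
  also have "\<dots> = (\<Sum>\<mu>\<in>I. integral\<^sup>L (NN s) (\<lambda>x. (f \<mu> x)\<^sup>2)) +
           (\<Sum>\<mu>\<in>I. \<Sum>\<nu>\<in>I - {\<mu>}. integral\<^sup>L (NN s) (f \<mu>) * integral\<^sup>L (NN s) (f \<nu>))"
  proof -
    have c1: "(\<integral>x. (f \<mu> (x \<mu>))\<^sup>2 \<partial>PiM I (\<lambda>_. NN s)) = integral\<^sup>L (NN s) (\<lambda>x. (f \<mu> x)\<^sup>2)" if "\<mu> \<in> I" for \<mu>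
      using PiM_comp(2)[OF P that, of "\<lambda>x. (f \<mu> x)\<^sup>2"] by simp
    have c2: "(\<integral>x. f \<mu> (x \<mu>) * f \<nu> (x \<nu>) \<partial>PiM I (\<lambda>_. NN s)) = integral\<^sup>L (NN s) (f \<mu>) * integral\<^sup>L (NN s) (f \<nu>)"
      if "\<mu> \<in> I" "\<nu> \<in> I - {\<mu>}" for \<mu> \<nu>
      using PiM_comp2(2)[OF s _ _ _ I, of \<mu> \<nu> "f \<mu>" "f \<nu>"] that fi by auto
    show ?thesis using c1 c2 by (intro arg_cong2[where f="(+)"] sum.cong refl) auto
  qed
  finally show "(\<integral>x. (\<Sum>\<mu>\<in>I. f \<mu> (x \<mu>))\<^sup>2 \<partial>PiM I (\<lambda>_. NN s)) =
           (\<Sum>\<mu>\<in>I. integral\<^sup>L (NN s) (\<lambda>x. (f \<mu> x)\<^sup>2)) +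
           (\<Sum>\<mu>\<in>I. \<Sum>\<nu>\<in>I - {\<mu>}. integral\<^sup>L (NN s) (f \<mu>) * integral\<^sup>L (NN s) (f \<nu>))" .
qed


lemma gg_meas[measurable (raw)]:
  assumes [measurable]: "f \<in> borel_measurable M" "g \<in> borel_measurable M"
  shows "(\<lambda>z. gg e (f z) (g z) k) \<in> borel_measurable M"
  unfolding gg_def hh_def by measurable

lemma SS_meas[measurable (raw)]:
  assumes [measurable]: "\<And>\<mu>. (\<lambda>z. Y z \<mu>) \<in> borel_measurable M" "\<And>\<mu>. (\<lambda>z. T z \<mu>) \<in> borel_measurable M"
  shows "(\<lambda>z. SS e P (Y z) (T z) k) \<in> borel_measurable M"
  unfolding SS_def by measurable

lemma gg_bound:
  assumes k: "k \<ge> 0"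
  shows "gg e x a k \<le> 2 * x\<^sup>2 + 4 * k\<^sup>2 * a\<^sup>2 + 4 * k\<^sup>2 * e\<^sup>2"
proof -
  have "hh e x a k \<le> \<bar>x\<bar> + k * (\<bar>a\<bar> + \<bar>e\<bar>)"
  proof -
    have "k * (a + e) \<ge> - (k * (\<bar>a\<bar> + \<bar>e\<bar>))" using k by (simp add: mult_left_mono minus_le_iff[symmetric] flip: mult_minus_right) 
    moreover have "k * (a - e) \<le> k * (\<bar>a\<bar> + \<bar>e\<bar>)" using k by (intro mult_left_mono) auto
    ultimately show ?thesis unfolding hh_def using k by (auto simp: abs_if)
  qed
  then have "gg e x a k \<le> (\<bar>x\<bar> + k * (\<bar>a\<bar> + \<bar>e\<bar>))\<^sup>2"
    unfolding gg_def by (intro power_mono hh_nonneg)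
  also have "\<dots> \<le> 2 * x\<^sup>2 + 2 * (k * (\<bar>a\<bar> + \<bar>e\<bar>))\<^sup>2"
  proof -
    have "(\<bar>x\<bar> + k * (\<bar>a\<bar> + \<bar>e\<bar>))\<^sup>2 + (\<bar>x\<bar> - k * (\<bar>a\<bar> + \<bar>e\<bar>))\<^sup>2 = 2 * x\<^sup>2 + 2 * (k * (\<bar>a\<bar> + \<bar>e\<bar>))\<^sup>2"
      by (simp add: power2_eq_square algebra_simps)
    then show ?thesis by (smt (verit) zero_le_power2)
  qed
  also have "(k * (\<bar>a\<bar> + \<bar>e\<bar>))\<^sup>2 \<le> 2 * k\<^sup>2 * a\<^sup>2 + 2 * k\<^sup>2 * e\<^sup>2"
  proof -
    have "(\<bar>a\<bar> + \<bar>e\<bar>)\<^sup>2 + (\<bar>a\<bar> - \<bar>e\<bar>)\<^sup>2 = 2 * a\<^sup>2 + 2 * e\<^sup>2"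
      by (simp add: power2_eq_square algebra_simps)
    then have "(\<bar>a\<bar> + \<bar>e\<bar>)\<^sup>2 \<le> 2 * a\<^sup>2 + 2 * e\<^sup>2" by (smt (verit) zero_le_power2)
    then have "k\<^sup>2 * (\<bar>a\<bar> + \<bar>e\<bar>)\<^sup>2 \<le> k\<^sup>2 * (2 * a\<^sup>2 + 2 * e\<^sup>2)" by (intro mult_left_mono) auto
    moreover have "(k * (\<bar>a\<bar> + \<bar>e\<bar>))\<^sup>2 = k\<^sup>2 * (\<bar>a\<bar> + \<bar>e\<bar>)\<^sup>2" by (rule power_mult_distrib)
    moreover have "k\<^sup>2 * (2 * a\<^sup>2 + 2 * e\<^sup>2) = 2 * k\<^sup>2 * a\<^sup>2 + 2 * k\<^sup>2 * e\<^sup>2" by (simp add: algebra_simps)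
    ultimately show ?thesis by linarith
  qed
  finally show ?thesis by simp
qed

lemma sq_le_1_4: "(x::real)\<^sup>2 \<le> 1 + x ^ 4"
proof -
  have "(x\<^sup>2 - 1)\<^sup>2 \<ge> 0" by simp
  then have "x ^ 4 - 2 * x\<^sup>2 + 1 \<ge> 0" by (simp add: power2_eq_square power4_eq_xxxx algebra_simps)
  moreover have "x\<^sup>2 \<ge> 0" by simp
  ultimately show ?thesis by linarith
qed

lemma gg_growth:
  assumes k: "k \<ge> 0"
  shows "\<bar>gg e x a k\<bar> \<le> (2 + 4 * k\<^sup>2 + 4 * k\<^sup>2 * e\<^sup>2) * (1 + x ^ 4 + a ^ 4)"
proof -
  have "\<bar>gg e x a k\<bar> = gg e x a k" by (simp add: gg_nonneg)
  also have "\<dots> \<le> 2 * x\<^sup>2 + 4 * k\<^sup>2 * a\<^sup>2 + 4 * k\<^sup>2 * e\<^sup>2" by (rule gg_bound[OF k])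
  also have "\<dots> \<le> 2 * (1 + x^4 + a^4) + 4 * k\<^sup>2 * (1 + x^4 + a^4) + 4 * k\<^sup>2 * e\<^sup>2 * (1 + x^4 + a^4)"
  proof -
    have x4: "x^4 \<ge> 0" "a^4 \<ge> 0" by (simp_all add: zero_le_even_power)
    have "x\<^sup>2 \<le> 1 + x^4 + a^4" "a\<^sup>2 \<le> 1 + x^4 + a^4" "1 \<le> 1 + x^4 + a^4"
      using sq_le_1_4[of x] sq_le_1_4[of a] x4 by linarith+
    then have "2 * x\<^sup>2 \<le> 2 * (1 + x^4 + a^4)" "4 * k\<^sup>2 * a\<^sup>2 \<le> 4 * k\<^sup>2 * (1 + x^4 + a^4)"
       "4 * k\<^sup>2 * e\<^sup>2 * 1 \<le> 4 * k\<^sup>2 * e\<^sup>2 * (1 + x^4 + a^4)"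
      by (intro mult_left_mono; simp)+
    then show ?thesis by linarith
  qed
  finally show ?thesis by (simp add: algebra_simps)
qed

lemma PG:
  fixes \<phi> :: "real \<Rightarrow> real \<Rightarrow> real"
  assumes s1: "s1 > 0" and s2: "s2 > 0"
    and m[measurable]: "(\<lambda>(a, x). \<phi> a x) \<in> borel_measurable (borel \<Otimes>\<^sub>M borel)"
    and b: "\<And>a x. \<bar>\<phi> a x\<bar> \<le> A * (1 + x ^ 4 + a ^ 4)"
  shows "\<And>a. integrable (NN s1) (\<phi> a)"
    and "(\<lambda>a. \<integral>x. \<phi> a x \<partial>NN s1) \<in> borel_measurable borel"
    and "\<And>a. \<bar>\<integral>x. \<phi> a x \<partial>NN s1\<bar> \<le> A * (1 + 3 * s1 ^ 4 + a ^ 4)"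
    and "integrable (NN s2) (\<lambda>a. \<integral>x. \<phi> a x \<partial>NN s1)"
proof -
  have A0: "A \<ge> 0" using b[of 0 0] abs_ge_zero[of "\<phi> 0 0"] by simp
  have ma[measurable]: "\<phi> a \<in> borel_measurable borel" for a
    using measurable_Pair2[OF m, of a] by simp
  have x4: "(x::real)^4 \<ge> 0" for x by (simp add: zero_le_even_power)
  show i: "integrable (NN s1) (\<phi> a)" for a
  proof (rule integrable_NN_growth[OF s1 ma])
    fix x
    have "1 + x ^ 4 + a ^ 4 \<le> (1 + a ^ 4) * (1 + x ^ 4)"
      using mult_nonneg_nonneg[OF x4[of a] x4[of x]] by (simp add: algebra_simps)
    then have "A * (1 + x ^ 4 + a ^ 4) \<le> A * ((1 + a ^ 4) * (1 + x ^ 4))"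
      by (rule mult_left_mono[OF _ A0])
    then have "A * (1 + x ^ 4 + a ^ 4) \<le> A * (1 + a ^ 4) * (1 + x ^ 4)" by (simp add: mult.assoc)
    then show "\<bar>\<phi> a x\<bar> \<le> A * (1 + a ^ 4) * (1 + x ^ 4)" using b[of a x] by linarith
  qed
  interpret N1: prob_space "NN s1" by (rule prob_NN[OF s1])
  show mi[measurable]: "(\<lambda>a. \<integral>x. \<phi> a x \<partial>NN s1) \<in> borel_measurable borel"
  proof (rule N1.borel_measurable_lebesgue_integral)
    have "sets (borel \<Otimes>\<^sub>M NN s1) = sets (borel \<Otimes>\<^sub>M borel)"
      by (rule sets_pair_measure_cong) auto
    then show "(\<lambda>(a, x). \<phi> a x) \<in> borel_measurable (borel \<Otimes>\<^sub>M NN s1)"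
      by (subst measurable_cong_sets[OF _ refl]) (assumption, rule m)
  qed
  have i4: "integrable (NN s1) (\<lambda>x. x ^ 4)"
    by (rule integrable_NN_growth[OF s1, where A=1]) (auto simp: x4)
  show bd: "\<bar>\<integral>x. \<phi> a x \<partial>NN s1\<bar> \<le> A * (1 + 3 * s1 ^ 4 + a ^ 4)" for a
  proof -
    have "\<bar>\<integral>x. \<phi> a x \<partial>NN s1\<bar> \<le> (\<integral>x. \<bar>\<phi> a x\<bar> \<partial>NN s1)"
      by (rule integral_abs_bound)
    also have "\<dots> \<le> (\<integral>x. A * (1 + x ^ 4 + a ^ 4) \<partial>NN s1)"
      using i[of a] i4 b by (intro integral_mono) auto
    also have "\<dots> = A * (1 + 3 * s1 ^ 4 + a ^ 4)"
    proof -
      have p1: "N1.prob UNIV = 1" using N1.prob_space by simp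
      show ?thesis using i4 NN_moment4[OF s1] by (simp add: p1 algebra_simps)
    qed
    finally show ?thesis .
  qed
  show "integrable (NN s2) (\<lambda>a. \<integral>x. \<phi> a x \<partial>NN s1)"
  proof (rule integrable_NN_growth[OF s2 mi])
    fix a
    have "1 + 3 * s1 ^ 4 + a ^ 4 \<le> (1 + 3 * s1 ^ 4) * (1 + a ^ 4)"
      using mult_nonneg_nonneg[OF x4[of s1] x4[of a]] by (simp add: algebra_simps)
    then have "A * (1 + 3 * s1 ^ 4 + a ^ 4) \<le> A * ((1 + 3 * s1 ^ 4) * (1 + a ^ 4))"
      by (rule mult_left_mono[OF _ A0])
    then have "A * (1 + 3 * s1 ^ 4 + a ^ 4) \<le> A * (1 + 3 * s1 ^ 4) * (1 + a ^ 4)" by (simp add: mult.assoc)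
    then show "\<bar>\<integral>x. \<phi> a x \<partial>NN s1\<bar> \<le> A * (1 + 3 * s1 ^ 4) * (1 + a ^ 4)" using bd[of a] by linarith
  qed
qed


lemma inf_rats:
  fixes f :: "real \<Rightarrow> real"
  assumes cont: "continuous_on {0..} f" and nn: "\<And>k. 0 \<le> f k"
  shows "(INF k\<in>{0..}. f k) = (INF k\<in>{q\<in>\<rat>. 0 \<le> q}. f k)"
proof -
  define Q where "Q = {q\<in>\<rat>. 0 \<le> (q::real)}"
  have Qne: "Q \<noteq> {}" unfolding Q_def using Rats_0 by blast
  have QS: "Q \<subseteq> {0..}" unfolding Q_def by blast
  have bdd0: "bdd_below (f ` {0..})" by (rule bdd_belowI[of _ 0]) (auto simp: nn)
  have bddQ: "bdd_below (f ` Q)" by (rule bdd_belowI[of _ 0]) (auto simp: nn)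
  have le1: "(INF k\<in>{0..}. f k) \<le> (INF k\<in>Q. f k)"
    by (rule cINF_superset_mono[OF Qne bdd0 QS order_refl])
  have le2: "(INF k\<in>Q. f k) \<le> f k" if k: "k \<ge> 0" for k
  proof (rule field_le_epsilon)
    fix e :: real assume e: "e > 0"
    have "continuous (at k within {0..}) f" using cont k by (simp add: continuous_on_eq_continuous_within)
    then obtain d where d: "d > 0" "\<And>x. x \<in> {0..} \<Longrightarrow> dist x k < d \<Longrightarrow> dist (f x) (f k) < e"
      using e unfolding continuous_within_eps_delta by blast
    obtain q where q: "q \<in> \<rat>" "k < q" "q < k + d" using Rats_dense_in_real[of k "k + d"] d by auto
    have "q \<in> Q" using q k unfolding Q_def by auto
    then have "(INF k\<in>Q. f k) \<le> f q" by (rule cINF_lower[OF bddQ])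
    also have "f q < f k + e" using d(2)[of q] q k by (auto simp: dist_real_def)
    finally show "(INF k\<in>Q. f k) \<le> f k + e" by simp
  qed
  have "(INF k\<in>Q. f k) \<le> (INF k\<in>{0..}. f k)"
    by (rule cINF_greatest) (use le2 in auto)
  with le1 show ?thesis unfolding Q_def by linarith
qed

lemma SS_cont: "continuous_on A (SS e P y t)"
  unfolding SS_def[abs_def] gg_def hh_def by (intro continuous_intros)

lemma sqdist_Q:
  assumes "r > 0" "e > 0"
  shows "sqdist_cone r e P y t = (INF k\<in>{q\<in>\<rat>. 0 \<le> q}. SS e P y t k)"
  using sqdist_eq[OF assms] inf_rats[OF SS_cont SS_nonneg] by simp

lemma sqdist_meas[measurable (raw)]:
  assumes "r > 0" "e > 0"
  assumes [measurable]: "\<And>\<mu>. (\<lambda>z. Y z \<mu>) \<in> borel_measurable M" "\<And>\<mu>. (\<lambda>z. T z \<mu>) \<in> borel_measurable M"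
  shows "(\<lambda>z. sqdist_cone r e P (Y z) (T z)) \<in> borel_measurable M"
proof -
  have c: "countable {q\<in>\<rat>. 0 \<le> (q::real)}"
    by (rule countable_subset[OF _ countable_rat]) auto
  have "(\<lambda>z. INF k\<in>{q\<in>\<rat>. 0 \<le> q}. SS e P (Y z) (T z) k) \<in> borel_measurable M"
    by (rule borel_measurable_cINF_real[OF c]) measurable
  then show ?thesis by (simp add: sqdist_Q[OF assms(1,2)])
qed

lemma sqdist_bounds:
  assumes "r > 0" "e > 0" "k \<ge> 0"
  shows "0 \<le> sqdist_cone r e P y t" "sqdist_cone r e P y t \<le> SS e P y t k"
proof -
  have bdd: "bdd_below (SS e P y t ` {0..})" by (rule bdd_belowI[of _ 0]) (auto simp: SS_nonneg)
  show "0 \<le> sqdist_cone r e P y t" unfolding sqdist_eq[OF assms(1,2)]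
    by (rule cINF_greatest) (auto simp: SS_nonneg)
  show "sqdist_cone r e P y t \<le> SS e P y t k" unfolding sqdist_eq[OF assms(1,2)]
    by (rule cINF_lower[OF bdd]) (use assms in auto)
qed

lemma sqdist_ge:
  assumes "r > 0" "e > 0" "\<And>k. k \<ge> 0 \<Longrightarrow> c \<le> SS e P y t k"
  shows "c \<le> sqdist_cone r e P y t"
  unfolding sqdist_eq[OF assms(1,2)] by (rule cINF_greatest) (use assms(3) in auto)

lemma prob_gv: "s > 0 \<Longrightarrow> prob_space (PiM I (\<lambda>_. NN s))"
  by (intro prob_space_PiM prob_NN)


definition FF :: "real \<Rightarrow> real \<Rightarrow> real \<Rightarrow> real" where
  "FF sg e k = (\<integral>a. (\<integral>x. gg e x a k \<partial>NN 1) \<partial>NN sg)"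

definition VV :: "real \<Rightarrow> real \<Rightarrow> real \<Rightarrow> real" where
  "VV sg e k = (\<integral>a. (\<integral>x. (gg e x a k - FF sg e k)\<^sup>2 \<partial>NN 1) \<partial>NN sg)"

lemma measurable_NN2[simp]: "measurable M (NN s) = measurable M borel"
  by (rule measurable_cong_sets) auto

lemma SS_meas2:
  assumes "\<And>\<mu>. \<mu> < P \<Longrightarrow> (\<lambda>z. Y z \<mu>) \<in> borel_measurable M" "\<And>\<mu>. \<mu> < P \<Longrightarrow> (\<lambda>z. T z \<mu>) \<in> borel_measurable M"
  shows "(\<lambda>z. SS e P (Y z) (T z) k) \<in> borel_measurable M"
  unfolding SS_def by (rule borel_measurable_sum) (intro gg_meas assms; simp)

lemma sqdist_meas2:
  assumes "r > 0" "e > 0"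
  assumes "\<And>\<mu>. \<mu> < P \<Longrightarrow> (\<lambda>z. Y z \<mu>) \<in> borel_measurable M" "\<And>\<mu>. \<mu> < P \<Longrightarrow> (\<lambda>z. T z \<mu>) \<in> borel_measurable M"
  shows "(\<lambda>z. sqdist_cone r e P (Y z) (T z)) \<in> borel_measurable M"
proof -
  have c: "countable {q\<in>\<rat>. 0 \<le> (q::real)}"
    by (rule countable_subset[OF _ countable_rat]) auto
  have "(\<lambda>z. INF k\<in>{q\<in>\<rat>. 0 \<le> q}. SS e P (Y z) (T z) k) \<in> borel_measurable M"
    by (rule borel_measurable_cINF_real[OF c]) (rule SS_meas2[OF assms(3,4)])
  then show ?thesis by (simp add: sqdist_Q[OF assms(1,2)])
qed

lemma comp_meas: "\<mu> < P \<Longrightarrow> (\<lambda>z. z \<mu>) \<in> borel_measurable (PiM {..<P} (\<lambda>_. NN s))"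
  using measurable_component_singleton[of \<mu> "{..<P}" "\<lambda>_. NN s"] by simp

lemma gg_pair_meas: "(\<lambda>(a, x). gg e x a k) \<in> borel_measurable (borel \<Otimes>\<^sub>M borel)"
  by measurable

context
  fixes sg e r :: real
  assumes sg: "sg > 0" and e: "e > 0" and r: "r > 0"
begin

abbreviation "PY P \<equiv> PiM {..<P} (\<lambda>_. NN sg)"
abbreviation "PT P \<equiv> PiM {..<P} (\<lambda>_. NN (1::real))"

lemma one_pos: "(1::real) > 0" by simp

lemma gg_int:
  assumes k: "k \<ge> 0"
  shows "\<And>a. integrable (NN 1) (\<lambda>x. gg e x a k)"
    and "(\<lambda>a. \<integral>x. gg e x a k \<partial>NN 1) \<in> borel_measurable borel"
    and "integrable (NN sg) (\<lambda>a. \<integral>x. gg e x a k \<partial>NN 1)"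
  using PG[OF one_pos sg, of "\<lambda>a x. gg e x a k", OF gg_pair_meas gg_growth[OF k]] by auto

lemma SS_int:
  assumes k: "k \<ge> 0"
  shows "integrable (PT P) (\<lambda>t. SS e P y t k)"
    and "(\<integral>t. SS e P y t k \<partial>PT P) = (\<Sum>\<mu><P. \<integral>x. gg e x (y \<mu>) k \<partial>NN 1)"
proof -
  have P1: "prob_space (NN (1::real))" by (rule prob_NN) simp
  have i: "integrable (PT P) (\<lambda>t. gg e (t \<mu>) (y \<mu>) k)" if "\<mu> < P" for \<mu>
    using PiM_comp(1)[OF P1, of \<mu> "{..<P}" "\<lambda>x. gg e x (y \<mu>) k"] that gg_int(1)[OF k] by simp
  show "integrable (PT P) (\<lambda>t. SS e P y t k)"
    unfolding SS_def using i by (intro Bochner_Integration.integrable_sum) auto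
  show "(\<integral>t. SS e P y t k \<partial>PT P) = (\<Sum>\<mu><P. \<integral>x. gg e x (y \<mu>) k \<partial>NN 1)"
    unfolding SS_def using i
    by (subst Bochner_Integration.integral_sum) (auto intro!: sum.cong PiM_comp(2)[OF P1])
qed

lemma SS0_int: "(\<integral>t. SS e P y t 0 \<partial>PT P) = real P"
proof -
  have "(\<integral>x. gg e x a 0 \<partial>NN 1) = 1" for a
  proof -
    have "gg e x a 0 = x\<^sup>2" for x unfolding gg_def hh_def by (auto simp: max_def power2_eq_square)
    then show ?thesis using NN_moment2[of 1] by simp
  qed
  then show ?thesis using SS_int(2)[of 0 P y] by simp
qed

lemma sqdist_int:
  shows "integrable (PT P) (\<lambda>t. sqdist_cone r e P y t)"
proof (rule Bochner_Integration.integrable_bound[OF SS_int(1)[of 0]])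
  show "(\<lambda>t. sqdist_cone r e P y t) \<in> borel_measurable (PT P)"
    by (rule sqdist_meas2[OF r e, where Y="\<lambda>_. y" and T="\<lambda>t. t"]) (auto intro: comp_meas)
  show "AE x in PT P. norm (sqdist_cone r e P y x) \<le> norm (SS e P y x 0)"
    using sqdist_bounds[OF r e, of 0] by (auto simp: SS_nonneg)
qed simp

lemma sqdist_int_bounds:
  shows "0 \<le> (\<integral>t. sqdist_cone r e P y t \<partial>PT P)" "(\<integral>t. sqdist_cone r e P y t \<partial>PT P) \<le> real P"
proof -
  show "0 \<le> (\<integral>t. sqdist_cone r e P y t \<partial>PT P)"
    using sqdist_bounds(1)[OF r e order_refl] by (intro integral_nonneg_AE) auto
  have "(\<integral>t. sqdist_cone r e P y t \<partial>PT P) \<le> (\<integral>t. SS e P y t 0 \<partial>PT P)"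
    using sqdist_bounds(2)[OF r e order_refl] by (intro integral_mono sqdist_int SS_int(1)) auto
  then show "(\<integral>t. sqdist_cone r e P y t \<partial>PT P) \<le> real P" using SS0_int by simp
qed

lemma sqdist_y_meas: "(\<lambda>y. \<integral>t. sqdist_cone r e P y t \<partial>PT P) \<in> borel_measurable (PY P)"
proof -
  interpret T: prob_space "PT P" by (rule prob_gv) simp
  have "(\<lambda>z. sqdist_cone r e P (fst z) (snd z)) \<in> borel_measurable (PY P \<Otimes>\<^sub>M PT P)"
    by (rule sqdist_meas2[OF r e]) (auto intro: measurable_compose[OF measurable_fst comp_meas] measurable_compose[OF measurable_snd comp_meas])
  then have "(\<lambda>(y, t). sqdist_cone r e P y t) \<in> borel_measurable (PY P \<Otimes>\<^sub>M PT P)"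
    by (simp add: case_prod_beta')
  then show ?thesis by (rule T.borel_measurable_lebesgue_integral)
qed

lemma sqdist_y_int: "integrable (PY P) (\<lambda>y. \<integral>t. sqdist_cone r e P y t \<partial>PT P)"
proof -
  interpret Y: prob_space "PY P" by (rule prob_gv[OF sg])
  show ?thesis
    by (rule Y.integrable_const_bound[where B="real P"]) (use sqdist_int_bounds sqdist_y_meas in auto)
qed

lemma mean_eq: "mean_alpha_inv r sg e P = (\<integral>y. (1 / real P) * (\<integral>t. sqdist_cone r e P y t \<partial>PT P) \<partial>PY P)"
  unfolding mean_alpha_inv_def alpha_mf_inv_def gauss_vec_NN by simp

lemma upper:
  assumes k: "k \<ge> 0"
  shows "mean_alpha_inv r sg e P \<le> FF sg e k"
proof (cases "P = 0")
  case True
  have "FF sg e k \<ge> 0" unfolding FF_def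
    by (intro integral_nonneg_AE AE_I2 integral_nonneg_AE) (auto simp: gg_nonneg)
  then show ?thesis using True by (simp add: mean_alpha_inv_def alpha_mf_inv_def)
next
  case False
  have P1: "prob_space (NN sg)" by (rule prob_NN[OF sg])
  let ?m0 = "\<lambda>a. \<integral>x. gg e x a k \<partial>NN 1"
  have i: "integrable (PY P) (\<lambda>y. ?m0 (y \<mu>))" if "\<mu> < P" for \<mu>
    using PiM_comp(1)[OF P1, of \<mu> "{..<P}" ?m0] that gg_int[OF k] by simp
  have "mean_alpha_inv r sg e P \<le> (\<integral>y. (1 / real P) * (\<integral>t. SS e P y t k \<partial>PT P) \<partial>PY P)"
    unfolding mean_eq
  proof (rule integral_mono)
    show "integrable (PY P) (\<lambda>y. 1 / real P * (\<integral>t. sqdist_cone r e P y t \<partial>PT P))"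
      using sqdist_y_int by simp
    show "integrable (PY P) (\<lambda>y. 1 / real P * (\<integral>t. SS e P y t k \<partial>PT P))"
      unfolding SS_int(2)[OF k] using i by (intro integrable_mult_right Bochner_Integration.integrable_sum) auto
    fix y
    have "(\<integral>t. sqdist_cone r e P y t \<partial>PT P) \<le> (\<integral>t. SS e P y t k \<partial>PT P)"
      using sqdist_bounds(2)[OF r e k] by (intro integral_mono sqdist_int SS_int(1)[OF k]) auto
    then show "1 / real P * (\<integral>t. sqdist_cone r e P y t \<partial>PT P) \<le> 1 / real P * (\<integral>t. SS e P y t k \<partial>PT P)"
      by (intro mult_left_mono) auto
  qed
  also have "\<dots> = (1 / real P) * (\<Sum>\<mu><P. \<integral>y. ?m0 (y \<mu>) \<partial>PY P)"
    unfolding SS_int(2)[OF k] using i by (subst Bochner_Integration.integral_sum[symmetric]) auto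
  also have "\<dots> = (1 / real P) * (\<Sum>\<mu><P. FF sg e k)"
    unfolding FF_def using gg_int[OF k] by (intro arg_cong2[where f="(*)"] sum.cong refl PiM_comp(2)[OF P1]) auto
  also have "\<dots> = FF sg e k" using False by simp
  finally show ?thesis .
qed

end


lemma gg_sq_bound:
  assumes k: "k \<ge> 0"
  shows "(gg e x a k)\<^sup>2 \<le> 12 * x ^ 4 + 48 * k ^ 4 * a ^ 4 + 48 * k ^ 4 * e ^ 4"
proof -
  let ?u = "2 * x\<^sup>2" and ?v = "4 * k\<^sup>2 * a\<^sup>2" and ?w = "4 * k\<^sup>2 * e\<^sup>2"
  have "(gg e x a k)\<^sup>2 \<le> (?u + ?v + ?w)\<^sup>2"
    using gg_bound[OF k, of e x a] gg_nonneg[of e x a k] by (intro power_mono) auto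
  also have "\<dots> \<le> 3 * (?u\<^sup>2 + ?v\<^sup>2 + ?w\<^sup>2)"
  proof -
    have "3 * (?u\<^sup>2 + ?v\<^sup>2 + ?w\<^sup>2) - (?u + ?v + ?w)\<^sup>2 = (?u - ?v)\<^sup>2 + (?v - ?w)\<^sup>2 + (?u - ?w)\<^sup>2"
      by (simp add: power2_eq_square algebra_simps)
    moreover have "(?u - ?v)\<^sup>2 + (?v - ?w)\<^sup>2 + (?u - ?w)\<^sup>2 \<ge> 0" by simp
    ultimately show ?thesis by linarith
  qed
  also have "\<dots> = 12 * x ^ 4 + 48 * k ^ 4 * a ^ 4 + 48 * k ^ 4 * e ^ 4"
    by (simp add: power2_eq_square power4_eq_xxxx algebra_simps)
  finally show ?thesis .
qed

lemma ggc_growth: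
  assumes k: "k \<ge> 0"
  shows "\<bar>gg e x a k - c\<bar> \<le> (2 + 4 * k\<^sup>2 + 4 * k\<^sup>2 * e\<^sup>2 + \<bar>c\<bar>) * (1 + x ^ 4 + a ^ 4)"
proof -
  have x4: "x ^ 4 \<ge> 0" "a ^ 4 \<ge> 0" by (simp_all add: zero_le_even_power)
  have "\<bar>c\<bar> \<le> \<bar>c\<bar> * (1 + x ^ 4 + a ^ 4)" using x4 by (simp add: mult_le_cancel_left1)
  moreover have "\<bar>gg e x a k - c\<bar> \<le> \<bar>gg e x a k\<bar> + \<bar>c\<bar>" by (rule abs_triangle_ineq4)
  moreover have "(2 + 4 * k\<^sup>2 + 4 * k\<^sup>2 * e\<^sup>2 + \<bar>c\<bar>) * (1 + x ^ 4 + a ^ 4) =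
     (2 + 4 * k\<^sup>2 + 4 * k\<^sup>2 * e\<^sup>2) * (1 + x ^ 4 + a ^ 4) + \<bar>c\<bar> * (1 + x ^ 4 + a ^ 4)"
    by (simp add: algebra_simps)
  ultimately show ?thesis using gg_growth[OF k, of e x a] by linarith
qed

lemma ggc2_growth:
  assumes k: "k \<ge> 0"
  shows "\<bar>(gg e x a k - c)\<^sup>2\<bar> \<le> (24 + 96 * k ^ 4 + 96 * k ^ 4 * e ^ 4 + 2 * c\<^sup>2) * (1 + x ^ 4 + a ^ 4)"
proof -
  have x4: "x ^ 4 \<ge> 0" "a ^ 4 \<ge> 0" "k ^ 4 \<ge> 0" "e ^ 4 \<ge> 0" by (simp_all add: zero_le_even_power)
  have "(gg e x a k - c)\<^sup>2 \<le> 2 * (gg e x a k)\<^sup>2 + 2 * c\<^sup>2"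
  proof -
    have "2 * (gg e x a k)\<^sup>2 + 2 * c\<^sup>2 - (gg e x a k - c)\<^sup>2 = (gg e x a k + c)\<^sup>2"
      by (simp add: power2_eq_square algebra_simps)
    then show ?thesis by (smt (verit) zero_le_power2)
  qed
  also have "\<dots> \<le> 24 * x ^ 4 + 96 * k ^ 4 * a ^ 4 + 96 * k ^ 4 * e ^ 4 + 2 * c\<^sup>2"
    using gg_sq_bound[OF k, of e x a] by linarith
  also have "\<dots> \<le> (24 + 96 * k ^ 4 + 96 * k ^ 4 * e ^ 4 + 2 * c\<^sup>2) * (1 + x ^ 4 + a ^ 4)"
  proof -
    have "24 * x ^ 4 \<le> 24 * (1 + x ^ 4 + a ^ 4)" using x4 by simp
    moreover have "96 * k ^ 4 * a ^ 4 \<le> 96 * k ^ 4 * (1 + x ^ 4 + a ^ 4)"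
      using x4 by (intro mult_left_mono) auto
    moreover have "96 * k ^ 4 * e ^ 4 * 1 \<le> 96 * k ^ 4 * e ^ 4 * (1 + x ^ 4 + a ^ 4)"
      using x4 by (intro mult_left_mono) auto
    moreover have "2 * c\<^sup>2 * 1 \<le> 2 * c\<^sup>2 * (1 + x ^ 4 + a ^ 4)"
      using x4 by (intro mult_left_mono) auto
    ultimately show ?thesis by (simp add: algebra_simps)
  qed
  finally show ?thesis by simp
qed

lemma ggc_pair_meas: "(\<lambda>(a, x). gg e x a k - c) \<in> borel_measurable (borel \<Otimes>\<^sub>M borel)"
  by measurable

lemma ggc2_pair_meas: "(\<lambda>(a, x). (gg e x a k - c)\<^sup>2) \<in> borel_measurable (borel \<Otimes>\<^sub>M borel)"
  by measurable

context
  fixes sg e r :: real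
  assumes sg: "sg > 0" and e: "e > 0" and r: "r > 0"
begin

abbreviation "PY' P \<equiv> PiM {..<P} (\<lambda>_. NN sg)"
abbreviation "PT' P \<equiv> PiM {..<P} (\<lambda>_. NN (1::real))"

lemma ggc_int:
  assumes k: "k \<ge> 0"
  shows "\<And>a. integrable (NN 1) (\<lambda>x. gg e x a k - c)"
    and "(\<lambda>a. \<integral>x. gg e x a k - c \<partial>NN 1) \<in> borel_measurable borel"
    and "integrable (NN sg) (\<lambda>a. \<integral>x. gg e x a k - c \<partial>NN 1)"
  using PG[OF zero_less_one sg, where \<phi>="\<lambda>a x. gg e x a k - c", OF ggc_pair_meas ggc_growth[OF k]] by auto

lemma ggc2_int:
  assumes k: "k \<ge> 0"
  shows "\<And>a. integrable (NN 1) (\<lambda>x. (gg e x a k - c)\<^sup>2)"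
    and "(\<lambda>a. \<integral>x. (gg e x a k - c)\<^sup>2 \<partial>NN 1) \<in> borel_measurable borel"
    and "integrable (NN sg) (\<lambda>a. \<integral>x. (gg e x a k - c)\<^sup>2 \<partial>NN 1)"
  using PG[OF zero_less_one sg, where \<phi>="\<lambda>a x. (gg e x a k - c)\<^sup>2", OF ggc2_pair_meas ggc2_growth[OF k]] by auto

lemma variance:
  assumes k: "k \<ge> 0" and P: "P \<ge> 1"
  shows "\<And>y. integrable (PT' P) (\<lambda>t. (SS e P y t k / real P - FF sg e k)\<^sup>2)"
    and "integrable (PY' P) (\<lambda>y. \<integral>t. (SS e P y t k / real P - FF sg e k)\<^sup>2 \<partial>PT' P)"
    and "(\<integral>y. (\<integral>t. (SS e P y t k / real P - FF sg e k)\<^sup>2 \<partial>PT' P) \<partial>PY' P) = VV sg e k / real P"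
proof -
  define c where "c = FF sg e k"
  define q where "q = (\<lambda>a. \<integral>x. (gg e x a k - c)\<^sup>2 \<partial>NN 1)"
  define m where "m = (\<lambda>a. \<integral>x. gg e x a k - c \<partial>NN 1)"
  have Pp: "real P > 0" using P by simp
  have N1: "prob_space (NN (1::real))" by (rule prob_NN) simp
  have Ns: "prob_space (NN sg)" by (rule prob_NN[OF sg])
  have eqs: "(SS e P y t k / real P - c)\<^sup>2 = (1 / real P)\<^sup>2 * (\<Sum>\<mu>\<in>{..<P}. (\<lambda>x. gg e x (y \<mu>) k - c) (t \<mu>))\<^sup>2" for y t
  proof -
    have "SS e P y t k / real P - c = (1 / real P) * (\<Sum>\<mu>\<in>{..<P}. gg e (t \<mu>) (y \<mu>) k - c)"
      using Pp by (simp add: SS_def sum_subtractf field_simps)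
    then show ?thesis by (simp add: power_divide)
  qed
  have inner: "integrable (PT' P) (\<lambda>t. (SS e P y t k / real P - c)\<^sup>2) \<and>
     (\<integral>t. (SS e P y t k / real P - c)\<^sup>2 \<partial>PT' P) =
       (1 / real P)\<^sup>2 * ((\<Sum>\<mu>\<in>{..<P}. q (y \<mu>)) + (\<Sum>\<mu>\<in>{..<P}. \<Sum>\<nu>\<in>{..<P} - {\<mu>}. m (y \<mu>) * m (y \<nu>)))" for y
  proof -
    let ?f = "\<lambda>\<mu> x. gg e x (y \<mu>) k - c"
    have fm: "?f \<mu> \<in> borel_measurable borel" for \<mu> by measurable
    have S1: "integrable (PT' P) (\<lambda>x. (\<Sum>\<mu>\<in>{..<P}. ?f \<mu> (x \<mu>))\<^sup>2)"
      by (rule PiM_sq_sum(1)[OF zero_less_one finite_lessThan fm]) (use ggc_int(1)[OF k] ggc2_int(1)[OF k] in auto)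
    have S2: "(\<integral>x. (\<Sum>\<mu>\<in>{..<P}. ?f \<mu> (x \<mu>))\<^sup>2 \<partial>PT' P) =
           (\<Sum>\<mu>\<in>{..<P}. integral\<^sup>L (NN 1) (\<lambda>x. (?f \<mu> x)\<^sup>2)) +
           (\<Sum>\<mu>\<in>{..<P}. \<Sum>\<nu>\<in>{..<P} - {\<mu>}. integral\<^sup>L (NN 1) (?f \<mu>) * integral\<^sup>L (NN 1) (?f \<nu>))"
      by (rule PiM_sq_sum(2)[OF zero_less_one finite_lessThan fm]) (use ggc_int(1)[OF k] ggc2_int(1)[OF k] in auto)
    show ?thesis unfolding eqs using S1 S2 by (simp add: q_def m_def)
  qed
  have qi: "integrable (NN sg) q" unfolding q_def by (rule ggc2_int(3)[OF k])
  have mi: "integrable (NN sg) m" unfolding m_def by (rule ggc_int(3)[OF k])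
  have qm: "q \<in> borel_measurable borel" unfolding q_def by (rule ggc2_int(2)[OF k])
  have mm: "m \<in> borel_measurable borel" unfolding m_def by (rule ggc_int(2)[OF k])
  have m0: "integral\<^sup>L (NN sg) m = 0"
  proof -
    interpret N1: prob_space "NN (1::real)" by (rule N1)
    interpret Ns: prob_space "NN sg" by (rule Ns)
    have p1: "N1.prob UNIV = 1" "Ns.prob UNIV = 1" using N1.prob_space Ns.prob_space by simp_all
    have "m a = (\<integral>x. gg e x a k \<partial>NN 1) - c" for a
      unfolding m_def using gg_int(1)[OF sg e r k] by (simp add: Bochner_Integration.integral_diff p1)
    then have "m = (\<lambda>a. (\<integral>x. gg e x a k \<partial>NN 1) - c)" by (simp add: fun_eq_iff)
    then have "integral\<^sup>L (NN sg) m = (\<integral>a. (\<integral>x. gg e x a k \<partial>NN 1) - c \<partial>NN sg)" by simp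
    also have "\<dots> = FF sg e k - c"
      using gg_int(3)[OF sg e r k] by (simp add: Bochner_Integration.integral_diff p1 FF_def)
    finally show ?thesis by (simp add: c_def)
  qed
  let ?Y = "\<lambda>y. (1 / real P)\<^sup>2 * ((\<Sum>\<mu>\<in>{..<P}. q (y \<mu>)) + (\<Sum>\<mu>\<in>{..<P}. \<Sum>\<nu>\<in>{..<P} - {\<mu>}. m (y \<mu>) * m (y \<nu>)))"
  have i1: "integrable (PY' P) (\<lambda>y. q (y \<mu>))" if "\<mu> \<in> {..<P}" for \<mu>
    using PiM_comp(1)[OF Ns that qm] qi by simp
  have i2: "integrable (PY' P) (\<lambda>y. m (y \<mu>) * m (y \<nu>))" if "\<mu> \<in> {..<P}" "\<nu> \<in> {..<P} - {\<mu>}" for \<mu> \<nu>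
    using PiM_comp2(1)[OF sg, of \<mu> "{..<P}" \<nu> m m] that mi mm by auto
  have iY: "integrable (PY' P) ?Y"
    using i1 i2 by (intro integrable_mult_right Bochner_Integration.integrable_add Bochner_Integration.integrable_sum) auto
  show "\<And>y. integrable (PT' P) (\<lambda>t. (SS e P y t k / real P - FF sg e k)\<^sup>2)"
    using inner by (simp add: c_def)
  have eqY: "(\<lambda>y. \<integral>t. (SS e P y t k / real P - FF sg e k)\<^sup>2 \<partial>PT' P) = ?Y"
    using inner by (simp add: c_def fun_eq_iff)
  show "integrable (PY' P) (\<lambda>y. \<integral>t. (SS e P y t k / real P - FF sg e k)\<^sup>2 \<partial>PT' P)"
    unfolding eqY by (rule iY)
  have "integral\<^sup>L (PY' P) ?Y = (1 / real P)\<^sup>2 * ((\<Sum>\<mu>\<in>{..<P}. \<integral>y. q (y \<mu>) \<partial>PY' P) +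
      (\<Sum>\<mu>\<in>{..<P}. \<Sum>\<nu>\<in>{..<P} - {\<mu>}. \<integral>y. m (y \<mu>) * m (y \<nu>) \<partial>PY' P))"
  proof -
    have iA: "integrable (PY' P) (\<lambda>y. \<Sum>\<mu>\<in>{..<P}. q (y \<mu>))"
      by (intro Bochner_Integration.integrable_sum) (use i1 in auto)
    have iB': "integrable (PY' P) (\<lambda>y. \<Sum>\<nu>\<in>{..<P} - {\<mu>}. m (y \<mu>) * m (y \<nu>))" if "\<mu> \<in> {..<P}" for \<mu>
      by (intro Bochner_Integration.integrable_sum) (use i2 that in auto)
    have iB: "integrable (PY' P) (\<lambda>y. \<Sum>\<mu>\<in>{..<P}. \<Sum>\<nu>\<in>{..<P} - {\<mu>}. m (y \<mu>) * m (y \<nu>))"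
      by (rule Bochner_Integration.integrable_sum) (use iB' in auto)
    have eA: "(\<integral>y. (\<Sum>\<mu>\<in>{..<P}. q (y \<mu>)) \<partial>PY' P) = (\<Sum>\<mu>\<in>{..<P}. \<integral>y. q (y \<mu>) \<partial>PY' P)"
      by (rule Bochner_Integration.integral_sum) (use i1 in auto)
    have eB': "(\<integral>y. (\<Sum>\<nu>\<in>{..<P} - {\<mu>}. m (y \<mu>) * m (y \<nu>)) \<partial>PY' P) = (\<Sum>\<nu>\<in>{..<P} - {\<mu>}. \<integral>y. m (y \<mu>) * m (y \<nu>) \<partial>PY' P)"
      if "\<mu> \<in> {..<P}" for \<mu>
      by (rule Bochner_Integration.integral_sum) (use i2 that in auto)
    have eB: "(\<integral>y. (\<Sum>\<mu>\<in>{..<P}. \<Sum>\<nu>\<in>{..<P} - {\<mu>}. m (y \<mu>) * m (y \<nu>)) \<partial>PY' P) =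
        (\<Sum>\<mu>\<in>{..<P}. \<Sum>\<nu>\<in>{..<P} - {\<mu>}. \<integral>y. m (y \<mu>) * m (y \<nu>) \<partial>PY' P)"
      by (subst Bochner_Integration.integral_sum) (use iB' eB' i2 in auto)
    have "integral\<^sup>L (PY' P) ?Y = (1 / real P)\<^sup>2 * ((\<integral>y. (\<Sum>\<mu>\<in>{..<P}. q (y \<mu>)) \<partial>PY' P) +
       (\<integral>y. (\<Sum>\<mu>\<in>{..<P}. \<Sum>\<nu>\<in>{..<P} - {\<mu>}. m (y \<mu>) * m (y \<nu>)) \<partial>PY' P))"
      by (simp only: integral_mult_right_zero Bochner_Integration.integral_add[OF iA iB])
    then show ?thesis by (simp only: eA eB)
  qed
  also have "\<dots> = (1 / real P)\<^sup>2 * ((\<Sum>\<mu>\<in>{..<P}. integral\<^sup>L (NN sg) q) + 0)"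
  proof -
    have a: "(\<integral>y. q (y \<mu>) \<partial>PY' P) = integral\<^sup>L (NN sg) q" if "\<mu> \<in> {..<P}" for \<mu>
      using PiM_comp(2)[OF Ns that qm] .
    have b: "(\<integral>y. m (y \<mu>) * m (y \<nu>) \<partial>PY' P) = 0" if "\<mu> \<in> {..<P}" "\<nu> \<in> {..<P} - {\<mu>}" for \<mu> \<nu>
      using PiM_comp2(2)[OF sg, of \<mu> "{..<P}" \<nu> m m] that mi mm m0 by auto
    show ?thesis using a b by simp
  qed
  also have "\<dots> = VV sg e k / real P"
    using Pp by (simp add: VV_def q_def c_def power2_eq_square)
  finally show "(\<integral>y. (\<integral>t. (SS e P y t k / real P - FF sg e k)\<^sup>2 \<partial>PT' P) \<partial>PY' P) = VV sg e k / real P"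
    unfolding eqY .
qed

end


context
  fixes sg e r :: real
  assumes sg: "sg > 0" and e: "e > 0" and r: "r > 0"
begin

lemma pointwise_lb:
  assumes h: "h > 0" and n: "n \<ge> 2" and d: "d > 0"
   and endF: "FF sg e (real n * h) \<ge> FF sg e 0 + 2 * d"
   and DF: "\<And>i. i < n \<Longrightarrow> \<bar>FF sg e (real (Suc i) * h) - FF sg e (real i * h)\<bar> \<le> D"
   and mF: "\<And>i. i \<le> n \<Longrightarrow> mF \<le> FF sg e (real i * h)"
   and P: "P \<ge> 1"
  shows "sqdist_cone r e P y t / real P \<ge> (mF - D - 3 * d) - (\<bar>mF - D - 3 * d\<bar> / d\<^sup>2) *
           (\<Sum>i\<in>{..n}. (SS e P y t (real i * h) / real P - FF sg e (real i * h))\<^sup>2)"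
proof -
  define c where "c = mF - D - 3 * d"
  define C where "C = \<bar>c\<bar> / d\<^sup>2"
  define G where "G = (\<lambda>k. SS e P y t k / real P)"
  define W where "W = (\<Sum>i\<in>{..n}. (G (real i * h) - FF sg e (real i * h))\<^sup>2)"
  have Pp: "real P > 0" using P by simp
  have C0: "C \<ge> 0" unfolding C_def by simp
  have W0: "W \<ge> 0" unfolding W_def by (intro sum_nonneg) auto
  have sq0: "sqdist_cone r e P y t / real P \<ge> 0" using sqdist_bounds(1)[OF r e order_refl] Pp by simp
  have goal: "sqdist_cone r e P y t / real P \<ge> c - C * W"
  proof (cases "\<forall>i\<le>n. \<bar>G (real i * h) - FF sg e (real i * h)\<bar> \<le> d")
    case True
    have Gk: "G k \<ge> (mF - d) - (D + 2 * d)" if k: "k \<ge> 0" for k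
    proof (rule grid_lb[OF _ h n _ _ _ k])
      show "cvx3 G" unfolding G_def by (rule SSn_cvx)
      show "G 0 \<le> G (real n * h)"
        using True[rule_format, of 0] True[rule_format, of n] endF by (auto simp: abs_le_iff)
      show "\<bar>G (real (Suc i) * h) - G (real i * h)\<bar> \<le> D + 2 * d" if "i < n" for i
        using True[rule_format, of i] True[rule_format, of "Suc i"] DF[OF that] that by (auto simp: abs_le_iff)
      show "mF - d \<le> G (real i * h)" if "i \<le> n" for i
        using True[rule_format, of i] mF[OF that] that by (auto simp: abs_le_iff)
    qed
    have "real P * c \<le> sqdist_cone r e P y t"
    proof (rule sqdist_ge[OF r e])
      fix k :: real assume "k \<ge> 0"
      then have "c \<le> SS e P y t k / real P" using Gk[of k] unfolding G_def c_def by simp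
      then show "real P * c \<le> SS e P y t k" using Pp by (simp add: pos_le_divide_eq mult.commute)
    qed
    then have "c \<le> sqdist_cone r e P y t / real P" using Pp by (simp add: pos_le_divide_eq mult.commute)
    moreover have "C * W \<ge> 0" using C0 W0 by simp
    ultimately show ?thesis by linarith
  next
    case False
    then obtain i where i: "i \<le> n" "\<bar>G (real i * h) - FF sg e (real i * h)\<bar> > d" by auto
    have "d ^ 2 < \<bar>G (real i * h) - FF sg e (real i * h)\<bar> ^ 2"
      by (rule power_strict_mono) (use i d in auto)
    then have "d\<^sup>2 < (G (real i * h) - FF sg e (real i * h))\<^sup>2" by simp
    also have "\<dots> \<le> W" unfolding W_def
      by (rule member_le_sum[of i "{..n}" "\<lambda>i. (G (real i * h) - FF sg e (real i * h))\<^sup>2"]) (use i in auto)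
    finally have "d\<^sup>2 \<le> W" by simp
    then have "C * d\<^sup>2 \<le> C * W" using C0 by (intro mult_left_mono)
    moreover have "C * d\<^sup>2 = \<bar>c\<bar>" using d by (simp add: C_def)
    ultimately have "c - C * W \<le> 0" by linarith
    then show ?thesis using sq0 by linarith
  qed
  then show ?thesis unfolding c_def C_def W_def G_def .
qed

abbreviation "PYh P \<equiv> PiM {..<P} (\<lambda>_. NN sg)"
abbreviation "PTh P \<equiv> PiM {..<P} (\<lambda>_. NN (1::real))"

lemma lower:
  assumes h: "h > 0" and n: "n \<ge> 2" and d: "d > 0"
   and endF: "FF sg e (real n * h) \<ge> FF sg e 0 + 2 * d"
   and DF: "\<And>i. i < n \<Longrightarrow> \<bar>FF sg e (real (Suc i) * h) - FF sg e (real i * h)\<bar> \<le> D"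
   and mF: "\<And>i. i \<le> n \<Longrightarrow> mF \<le> FF sg e (real i * h)"
   and P: "P \<ge> 1"
  shows "mean_alpha_inv r sg e P \<ge> (mF - D - 3 * d) - (\<bar>mF - D - 3 * d\<bar> / d\<^sup>2) *
           (\<Sum>i\<in>{..n}. VV sg e (real i * h)) / real P"
proof -
  define c where "c = mF - D - 3 * d"
  define C where "C = \<bar>c\<bar> / d\<^sup>2"
  define w where "w = (\<lambda>i y t. (SS e P y t (real i * h) / real P - FF sg e (real i * h))\<^sup>2)"
  have Pp: "real P > 0" using P by simp
  interpret T: prob_space "PTh P" by (rule prob_gv) simp
  interpret Y: prob_space "PYh P" by (rule prob_gv[OF sg])
  have pT: "T.prob (space (PTh P)) = 1" by (rule T.prob_space)
  have pY: "Y.prob (space (PYh P)) = 1" by (rule Y.prob_space)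
  have hi: "real i * h \<ge> 0" for i using h by simp
  have wi: "integrable (PTh P) (w i y)" for i y
    unfolding w_def by (rule variance(1)[OF sg e r hi P])
  have wyi: "integrable (PYh P) (\<lambda>y. \<integral>t. w i y t \<partial>PTh P)" for i
    unfolding w_def by (rule variance(2)[OF sg e r hi P])
  have wv: "(\<integral>y. (\<integral>t. w i y t \<partial>PTh P) \<partial>PYh P) = VV sg e (real i * h) / real P" for i
    unfolding w_def by (rule variance(3)[OF sg e r hi P])
  have inner: "(1 / real P) * (\<integral>t. sqdist_cone r e P y t \<partial>PTh P) \<ge> c - C * (\<Sum>i\<in>{..n}. \<integral>t. w i y t \<partial>PTh P)" for y
  proof -
    have i2: "integrable (PTh P) (\<lambda>t. c - C * (\<Sum>i\<in>{..n}. w i y t))"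
      using wi by (intro Bochner_Integration.integrable_diff integrable_mult_right Bochner_Integration.integrable_sum) auto
    have "(\<integral>t. c - C * (\<Sum>i\<in>{..n}. w i y t) \<partial>PTh P) \<le> (\<integral>t. sqdist_cone r e P y t / real P \<partial>PTh P)"
    proof (rule integral_mono[OF i2])
      show "integrable (PTh P) (\<lambda>t. sqdist_cone r e P y t / real P)"
        using sqdist_int[OF sg e r] by simp
      show "c - C * (\<Sum>i\<in>{..n}. w i y t) \<le> sqdist_cone r e P y t / real P" for t
        using pointwise_lb[OF h n d endF DF mF P, of y t] unfolding c_def C_def w_def by simp
    qed
    moreover have "(\<integral>t. c - C * (\<Sum>i\<in>{..n}. w i y t) \<partial>PTh P) = c - C * (\<Sum>i\<in>{..n}. \<integral>t. w i y t \<partial>PTh P)"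
    proof -
      have "(\<integral>t. c - C * (\<Sum>i\<in>{..n}. w i y t) \<partial>PTh P) = c - C * (\<integral>t. (\<Sum>i\<in>{..n}. w i y t) \<partial>PTh P)"
        using wi pT by (subst Bochner_Integration.integral_diff) (auto intro!: Bochner_Integration.integrable_sum)
      also have "(\<integral>t. (\<Sum>i\<in>{..n}. w i y t) \<partial>PTh P) = (\<Sum>i\<in>{..n}. \<integral>t. w i y t \<partial>PTh P)"
        by (rule Bochner_Integration.integral_sum) (use wi in auto)
      finally show ?thesis .
    qed
    moreover have "(\<integral>t. sqdist_cone r e P y t / real P \<partial>PTh P) = (1 / real P) * (\<integral>t. sqdist_cone r e P y t \<partial>PTh P)"
      by simp
    ultimately show ?thesis by linarith
  qed
  have iR: "integrable (PYh P) (\<lambda>y. c - C * (\<Sum>i\<in>{..n}. \<integral>t. w i y t \<partial>PTh P))"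
    using wyi by (intro Bochner_Integration.integrable_diff integrable_mult_right Bochner_Integration.integrable_sum) auto
  have "(\<integral>y. c - C * (\<Sum>i\<in>{..n}. \<integral>t. w i y t \<partial>PTh P) \<partial>PYh P) \<le> mean_alpha_inv r sg e P"
    unfolding mean_eq[OF sg e r]
  proof (rule integral_mono[OF iR])
    show "integrable (PYh P) (\<lambda>y. 1 / real P * (\<integral>t. sqdist_cone r e P y t \<partial>PTh P))"
      using sqdist_y_int[OF sg e r] by simp
  qed (rule inner)
  moreover have "(\<integral>y. c - C * (\<Sum>i\<in>{..n}. \<integral>t. w i y t \<partial>PTh P) \<partial>PYh P) = c - C * (\<Sum>i\<in>{..n}. VV sg e (real i * h) / real P)"
  proof -
    have "(\<integral>y. c - C * (\<Sum>i\<in>{..n}. \<integral>t. w i y t \<partial>PTh P) \<partial>PYh P) = c - C * (\<integral>y. (\<Sum>i\<in>{..n}. \<integral>t. w i y t \<partial>PTh P) \<partial>PYh P)"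
      using wyi pY by (subst Bochner_Integration.integral_diff) (auto intro!: Bochner_Integration.integrable_sum)
    also have "(\<integral>y. (\<Sum>i\<in>{..n}. \<integral>t. w i y t \<partial>PTh P) \<partial>PYh P) = (\<Sum>i\<in>{..n}. VV sg e (real i * h) / real P)"
      by (subst Bochner_Integration.integral_sum) (use wyi wv in auto)
    finally show ?thesis .
  qed
  ultimately have "c - C * (\<Sum>i\<in>{..n}. VV sg e (real i * h) / real P) \<le> mean_alpha_inv r sg e P" by simp
  moreover have "C * (\<Sum>i\<in>{..n}. VV sg e (real i * h) / real P) = C * (\<Sum>i\<in>{..n}. VV sg e (real i * h)) / real P"
    by (simp add: sum_divide_distrib[symmetric])
  ultimately show ?thesis unfolding c_def C_def by simp
qed

end


lemma max_lip: "\<bar>max (u::real) v - max u' v'\<bar> \<le> max \<bar>u - u'\<bar> \<bar>v - v'\<bar>"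
  by (auto simp: max_def abs_if)

lemma hh_lip:
  "\<bar>hh e x a k - hh e x a k'\<bar> \<le> \<bar>k - k'\<bar> * (\<bar>a\<bar> + \<bar>e\<bar>)"
proof -
  have 1: "\<bar>(x - k * (a + e)) - (x - k' * (a + e))\<bar> \<le> \<bar>k - k'\<bar> * (\<bar>a\<bar> + \<bar>e\<bar>)"
  proof -
    have "\<bar>(x - k * (a + e)) - (x - k' * (a + e))\<bar> = \<bar>k - k'\<bar> * \<bar>a + e\<bar>"
      by (simp add: abs_mult[symmetric] algebra_simps)
    also have "\<dots> \<le> \<bar>k - k'\<bar> * (\<bar>a\<bar> + \<bar>e\<bar>)" by (intro mult_left_mono abs_triangle_ineq) simp
    finally show ?thesis .
  qed
  have 2: "\<bar>(k * (a - e) - x) - (k' * (a - e) - x)\<bar> \<le> \<bar>k - k'\<bar> * (\<bar>a\<bar> + \<bar>e\<bar>)"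
  proof -
    have "\<bar>(k * (a - e) - x) - (k' * (a - e) - x)\<bar> = \<bar>k - k'\<bar> * \<bar>a - e\<bar>"
      by (simp add: abs_mult[symmetric] algebra_simps)
    also have "\<dots> \<le> \<bar>k - k'\<bar> * (\<bar>a\<bar> + \<bar>e\<bar>)" by (intro mult_left_mono abs_triangle_ineq4) simp
    finally show ?thesis .
  qed
  have "\<bar>hh e x a k - hh e x a k'\<bar> \<le> max \<bar>0 - 0\<bar> \<bar>max (x - k * (a + e)) (k * (a - e) - x) - max (x - k' * (a + e)) (k' * (a - e) - x)\<bar>"
    unfolding hh_def by (rule max_lip)
  also have "\<dots> \<le> \<bar>k - k'\<bar> * (\<bar>a\<bar> + \<bar>e\<bar>)"
    using order_trans[OF max_lip max.boundedI[OF 1 2]] by simp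
  finally show ?thesis .
qed

lemma hh_le: "k \<ge> 0 \<Longrightarrow> k \<le> K \<Longrightarrow> hh e x a k \<le> \<bar>x\<bar> + K * (\<bar>a\<bar> + \<bar>e\<bar>)"
proof -
  assume k: "k \<ge> 0" "k \<le> K"
  have "k * (a + e) \<ge> - (k * (\<bar>a\<bar> + \<bar>e\<bar>))"
  proof -
    have "- (a + e) \<le> \<bar>a\<bar> + \<bar>e\<bar>" by linarith
    then have "k * (- (a + e)) \<le> k * (\<bar>a\<bar> + \<bar>e\<bar>)" using k by (intro mult_left_mono) auto
    moreover have "k * (- (a + e)) = - (k * (a + e))" by (rule mult_minus_right)
    ultimately show ?thesis by linarith
  qed
  moreover have "k * (a - e) \<le> k * (\<bar>a\<bar> + \<bar>e\<bar>)" using k by (intro mult_left_mono) auto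
  moreover have "k * (\<bar>a\<bar> + \<bar>e\<bar>) \<le> K * (\<bar>a\<bar> + \<bar>e\<bar>)" using k by (intro mult_right_mono) auto
  moreover have "k * (\<bar>a\<bar> + \<bar>e\<bar>) \<ge> 0" using k by simp
  moreover have "x \<le> \<bar>x\<bar>" "- x \<le> \<bar>x\<bar>" by linarith+
  ultimately show ?thesis unfolding hh_def by (intro max.boundedI) linarith+
qed

definition lipf :: "real \<Rightarrow> real \<Rightarrow> real \<Rightarrow> real \<Rightarrow> real" where
  "lipf e K a x = 2 * (\<bar>a\<bar> + \<bar>e\<bar>) * (\<bar>x\<bar> + K * (\<bar>a\<bar> + \<bar>e\<bar>))"

lemma gg_lip:
  assumes "0 \<le> k" "k \<le> K" "0 \<le> k'" "k' \<le> K"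
  shows "\<bar>gg e x a k - gg e x a k'\<bar> \<le> \<bar>k - k'\<bar> * lipf e K a x"
proof -
  have eq: "gg e x a k - gg e x a k' = (hh e x a k - hh e x a k') * (hh e x a k + hh e x a k')"
    unfolding gg_def by (simp add: power2_eq_square algebra_simps)
  have ab: "\<bar>hh e x a k + hh e x a k'\<bar> = hh e x a k + hh e x a k'"
    by (rule abs_of_nonneg[OF add_nonneg_nonneg[OF hh_nonneg hh_nonneg]])
  have "\<bar>gg e x a k - gg e x a k'\<bar> = \<bar>hh e x a k - hh e x a k'\<bar> * (hh e x a k + hh e x a k')"
    unfolding eq abs_mult ab ..
  also have "\<dots> \<le> (\<bar>k - k'\<bar> * (\<bar>a\<bar> + \<bar>e\<bar>)) * (2 * (\<bar>x\<bar> + K * (\<bar>a\<bar> + \<bar>e\<bar>)))"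
    using hh_le[OF assms(1,2), of e x a] hh_le[OF assms(3,4), of e x a]
    by (intro mult_mono hh_lip) (auto simp: hh_nonneg)
  finally show ?thesis by (simp add: lipf_def algebra_simps)
qed

lemma lipf_growth:
  assumes K: "K \<ge> 0"
  shows "\<bar>lipf e K a x\<bar> \<le> (3 + 4 * K + (2 + 4 * K) * e\<^sup>2) * (1 + x ^ 4 + a ^ 4)"
proof -
  have x4: "x ^ 4 \<ge> 0" "a ^ 4 \<ge> 0" by (simp_all add: zero_le_even_power)
  have s1: "(\<bar>a\<bar> + \<bar>e\<bar>)\<^sup>2 \<le> 2 * a\<^sup>2 + 2 * e\<^sup>2"
  proof -
    have "2 * a\<^sup>2 + 2 * e\<^sup>2 - (\<bar>a\<bar> + \<bar>e\<bar>)\<^sup>2 = (\<bar>a\<bar> - \<bar>e\<bar>)\<^sup>2" by (simp add: power2_eq_square algebra_simps)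
    moreover have "(\<bar>a\<bar> - \<bar>e\<bar>)\<^sup>2 \<ge> 0" by simp
    ultimately show ?thesis by linarith
  qed
  have s2: "2 * (\<bar>a\<bar> + \<bar>e\<bar>) * \<bar>x\<bar> \<le> (\<bar>a\<bar> + \<bar>e\<bar>)\<^sup>2 + x\<^sup>2"
  proof -
    have "(\<bar>a\<bar> + \<bar>e\<bar>)\<^sup>2 + x\<^sup>2 - 2 * (\<bar>a\<bar> + \<bar>e\<bar>) * \<bar>x\<bar> = (\<bar>a\<bar> + \<bar>e\<bar> - \<bar>x\<bar>)\<^sup>2" by (simp add: power2_eq_square algebra_simps)
    moreover have "(\<bar>a\<bar> + \<bar>e\<bar> - \<bar>x\<bar>)\<^sup>2 \<ge> 0" by simp
    ultimately show ?thesis by linarith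
  qed
  have l0: "lipf e K a x \<ge> 0" unfolding lipf_def using K by simp
  have "lipf e K a x = 2 * (\<bar>a\<bar> + \<bar>e\<bar>) * \<bar>x\<bar> + 2 * K * (\<bar>a\<bar> + \<bar>e\<bar>)\<^sup>2"
    unfolding lipf_def by (simp add: power2_eq_square algebra_simps)
  also have "\<dots> \<le> ((\<bar>a\<bar> + \<bar>e\<bar>)\<^sup>2 + x\<^sup>2) + 2 * K * (2 * a\<^sup>2 + 2 * e\<^sup>2)"
    using s1 s2 K by (intro add_mono mult_left_mono) auto
  also have "\<dots> \<le> (2 * a\<^sup>2 + 2 * e\<^sup>2 + x\<^sup>2) + 2 * K * (2 * a\<^sup>2 + 2 * e\<^sup>2)"
    using s1 by simp
  also have "\<dots> = x\<^sup>2 + (2 + 4 * K) * a\<^sup>2 + (2 + 4 * K) * e\<^sup>2" by (simp add: algebra_simps)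
  also have "\<dots> \<le> (1 + x ^ 4 + a ^ 4) + (2 + 4 * K) * (1 + x ^ 4 + a ^ 4) + (2 + 4 * K) * e\<^sup>2 * (1 + x ^ 4 + a ^ 4)"
  proof -
    have "x\<^sup>2 \<le> 1 + x ^ 4 + a ^ 4" "a\<^sup>2 \<le> 1 + x ^ 4 + a ^ 4" using sq_le_1_4[of x] sq_le_1_4[of a] x4 by linarith+
    moreover have "(2 + 4 * K) * a\<^sup>2 \<le> (2 + 4 * K) * (1 + x ^ 4 + a ^ 4)"
      using calculation K by (intro mult_left_mono) auto
    moreover have "(2 + 4 * K) * e\<^sup>2 * 1 \<le> (2 + 4 * K) * e\<^sup>2 * (1 + x ^ 4 + a ^ 4)"
      using x4 K by (intro mult_left_mono) auto
    ultimately show ?thesis by linarith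
  qed
  also have "\<dots> = (3 + 4 * K + (2 + 4 * K) * e\<^sup>2) * (1 + x ^ 4 + a ^ 4)" by (simp add: algebra_simps)
  finally show ?thesis using l0 by simp
qed

lemma lipf_pair_meas: "(\<lambda>(a, x). lipf e K a x) \<in> borel_measurable (borel \<Otimes>\<^sub>M borel)"
  unfolding lipf_def by measurable

lemma coerc_pt:
  assumes k: "k \<ge> 0"
  shows "gg e x a k \<ge> k\<^sup>2 * (max 0 (\<bar>a\<bar> - e))\<^sup>2 / 2 - x\<^sup>2"
proof -
  define M where "M = max 0 (\<bar>a\<bar> - e)"
  have M0: "M \<ge> 0" by (simp add: M_def)
  have kM: "k * M \<ge> 0" using k M0 by simp
  have h1: "hh e x a k \<ge> k * M - \<bar>x\<bar>"
  proof (cases "\<bar>a\<bar> \<le> e")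
    case True then have "M = 0" by (simp add: M_def)
    then show ?thesis using hh_nonneg[of e x a k] by simp
  next
    case False then have Me: "M = \<bar>a\<bar> - e" by (simp add: M_def)
    show ?thesis
    proof (cases "a \<ge> 0")
      case True
      then have "k * M - \<bar>x\<bar> \<le> k * (a - e) - x" using Me by simp
      then show ?thesis unfolding hh_def by simp
    next
      case False
      then have Ma: "M = - a - e" using Me by simp
      have "k * M = - (k * (a + e))" unfolding Ma by (simp add: algebra_simps)
      moreover have "- \<bar>x\<bar> \<le> x" by linarith
      ultimately have "k * M - \<bar>x\<bar> \<le> x - k * (a + e)" by linarith
      then show ?thesis unfolding hh_def by simp
    qed
  qed
  define z where "z = max 0 (k * M - \<bar>x\<bar>)"
  have z: "0 \<le> z" "z \<le> hh e x a k" using h1 hh_nonneg[of e x a k] by (auto simp: z_def)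
  have "z\<^sup>2 \<ge> (k * M)\<^sup>2 / 2 - x\<^sup>2"
  proof (cases "k * M \<ge> \<bar>x\<bar>")
    case True
    then have zz: "z\<^sup>2 = (k * M - \<bar>x\<bar>)\<^sup>2" by (simp add: z_def)
    have "(k * M - \<bar>x\<bar>)\<^sup>2 - ((k * M)\<^sup>2 / 2 - x\<^sup>2) = (k * M - 2 * \<bar>x\<bar>)\<^sup>2 / 2"
      by (simp add: power2_eq_square algebra_simps)
    moreover have "(k * M - 2 * \<bar>x\<bar>)\<^sup>2 / 2 \<ge> 0" by simp
    ultimately show ?thesis using zz by linarith
  next
    case False
    then have "(k * M)\<^sup>2 \<le> \<bar>x\<bar>\<^sup>2" using kM by (intro power_mono) auto
    then have "(k * M)\<^sup>2 \<le> x\<^sup>2" by simp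
    moreover have "x\<^sup>2 \<ge> 0" by simp
    ultimately have "(k * M)\<^sup>2 / 2 - x\<^sup>2 \<le> 0" by linarith
    moreover have "z\<^sup>2 \<ge> 0" by simp
    ultimately show ?thesis by linarith
  qed
  also have "z\<^sup>2 \<le> gg e x a k" unfolding gg_def using z by (intro power_mono) auto
  finally show ?thesis by (simp add: M_def power_mult_distrib)
qed

lemma rho_pos:
  assumes sg: "sg > 0" and e: "e > 0"
  shows "(\<integral>a. (max 0 (\<bar>a\<bar> - e))\<^sup>2 \<partial>NN sg) > 0"
proof -
  let ?f = "\<lambda>a::real. (max 0 (\<bar>a\<bar> - e))\<^sup>2"
  have fm[measurable]: "?f \<in> borel_measurable borel" by measurable
  have fi: "integrable (NN sg) ?f"
  proof (rule integrable_NN_growth[OF sg fm, where A=1])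
    fix x :: real
    have "max 0 (\<bar>x\<bar> - e) \<le> \<bar>x\<bar>" using e by simp
    then have "?f x \<le> \<bar>x\<bar>\<^sup>2" by (intro power_mono) auto
    then have "?f x \<le> x\<^sup>2" by simp
    then show "\<bar>?f x\<bar> \<le> 1 * (1 + x ^ 4)" using sq_le_1_4[of x] by simp
  qed
  have nn: "integral\<^sup>L (NN sg) ?f \<ge> 0" by (intro integral_nonneg_AE) auto
  have "integral\<^sup>L (NN sg) ?f \<noteq> 0"
  proof
    assume "integral\<^sup>L (NN sg) ?f = 0"
    then have "AE x in NN sg. ?f x = 0" using integral_nonneg_eq_0_iff_AE[OF fi] by auto
    then have "AE x in lborel. 0 < normal_density 0 sg x \<longrightarrow> ?f x = 0"
      unfolding NN_def by (subst (asm) AE_density) auto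
    then have ae: "AE x in lborel. ?f x = 0" using normal_density_pos[OF sg] by simp
    have "{e + 1 <..< e + 2} \<subseteq> {x \<in> space lborel. \<not> ?f x = 0}"
      using e by auto
    moreover have "{x \<in> space lborel. \<not> ?f x = 0} \<in> sets lborel" by measurable
    ultimately have "emeasure lborel {e + 1 <..< e + 2} \<le> emeasure lborel {x \<in> space lborel. \<not> ?f x = 0}"
      by (intro emeasure_mono)
    moreover have "emeasure lborel {x \<in> space lborel. \<not> ?f x = 0} = 0"
      using ae AE_iff_measurable[OF \<open>{x \<in> space lborel. \<not> ?f x = 0} \<in> sets lborel\<close> refl] by simp
    ultimately show False by simp
  qed
  then show ?thesis using nn by (intro order_le_neq_trans) auto
qed

context
  fixes sg e r :: real
  assumes sg: "sg > 0" and e: "e > 0" and r: "r > 0"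
begin

definition LL :: "real \<Rightarrow> real" where
  "LL K = (\<integral>a. (\<integral>x. lipf e K a x \<partial>NN 1) \<partial>NN sg)"

lemma FF_lip:
  assumes k: "0 \<le> k" "k \<le> K" "0 \<le> k'" "k' \<le> K"
  shows "\<bar>FF sg e k - FF sg e k'\<bar> \<le> \<bar>k - k'\<bar> * LL K"
proof -
  have K: "K \<ge> 0" using k by linarith
  note L = PG[OF zero_less_one sg, where \<phi>="\<lambda>a x. lipf e K a x", OF lipf_pair_meas lipf_growth[OF K]]
  note G1 = gg_int[OF sg e r k(1)] and G2 = gg_int[OF sg e r k(3)]
  let ?m = "\<lambda>k a. \<integral>x. gg e x a k \<partial>NN 1"
  let ?p = "\<lambda>a. \<integral>x. lipf e K a x \<partial>NN 1"
  have pt: "\<bar>?m k a - ?m k' a\<bar> \<le> \<bar>k - k'\<bar> * ?p a" for a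
  proof -
    have "?m k a - ?m k' a = (\<integral>x. gg e x a k - gg e x a k' \<partial>NN 1)"
      using G1(1) G2(1) by (simp add: Bochner_Integration.integral_diff)
    then have "\<bar>?m k a - ?m k' a\<bar> \<le> (\<integral>x. \<bar>gg e x a k - gg e x a k'\<bar> \<partial>NN 1)"
      by (simp add: integral_abs_bound)
    also have "\<dots> \<le> (\<integral>x. \<bar>k - k'\<bar> * lipf e K a x \<partial>NN 1)"
      using G1(1) G2(1) L(1) by (intro integral_mono gg_lip[OF k]) auto
    also have "\<dots> = \<bar>k - k'\<bar> * ?p a" by simp
    finally show ?thesis .
  qed
  have "FF sg e k - FF sg e k' = (\<integral>a. ?m k a - ?m k' a \<partial>NN sg)"
    unfolding FF_def using G1(3) G2(3) by (simp add: Bochner_Integration.integral_diff)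
  then have "\<bar>FF sg e k - FF sg e k'\<bar> \<le> (\<integral>a. \<bar>?m k a - ?m k' a\<bar> \<partial>NN sg)"
    by (simp add: integral_abs_bound)
  also have "\<dots> \<le> (\<integral>a. \<bar>k - k'\<bar> * ?p a \<partial>NN sg)"
    using G1(3) G2(3) L(4) pt by (intro integral_mono) auto
  also have "\<dots> = \<bar>k - k'\<bar> * LL K" by (simp add: LL_def)
  finally show ?thesis .
qed

lemma FF0: "FF sg e 0 = 1"
proof -
  interpret Ns: prob_space "NN sg" by (rule prob_NN[OF sg])
  have "gg e x a 0 = x\<^sup>2" for x a unfolding gg_def hh_def by (auto simp: max_def power2_eq_square)
  then show ?thesis unfolding FF_def using NN_moment2[of 1] Ns.prob_space by simp
qed

lemma FF_coerc:
  assumes k: "k \<ge> 0"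
  shows "FF sg e k \<ge> k\<^sup>2 * (\<integral>a. (max 0 (\<bar>a\<bar> - e))\<^sup>2 \<partial>NN sg) / 2 - 1"
proof -
  interpret N1: prob_space "NN (1::real)" by (rule prob_NN) simp
  interpret Ns: prob_space "NN sg" by (rule prob_NN[OF sg])
  have p1: "N1.prob UNIV = 1" "Ns.prob UNIV = 1" using N1.prob_space Ns.prob_space by simp_all
  let ?f = "\<lambda>a::real. (max 0 (\<bar>a\<bar> - e))\<^sup>2"
  have fm[measurable]: "?f \<in> borel_measurable borel" by measurable
  have fi: "integrable (NN sg) ?f"
  proof (rule integrable_NN_growth[OF sg fm, where A=1])
    fix x :: real
    have "max 0 (\<bar>x\<bar> - e) \<le> \<bar>x\<bar>" using e by simp
    then have "?f x \<le> \<bar>x\<bar>\<^sup>2" by (intro power_mono) auto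
    then have "?f x \<le> x\<^sup>2" by simp
    then show "\<bar>?f x\<bar> \<le> 1 * (1 + x ^ 4)" using sq_le_1_4[of x] by simp
  qed
  have x2i: "integrable (NN 1) (\<lambda>x::real. x\<^sup>2)"
    by (rule integrable_NN_growth[where A=1]) (auto simp: sq_le_1_4)
  note G = gg_int[OF sg e r k]
  have inner: "k\<^sup>2 * ?f a / 2 - 1 \<le> (\<integral>x. gg e x a k \<partial>NN 1)" for a
  proof -
    have "(\<integral>x. k\<^sup>2 * ?f a / 2 - x\<^sup>2 \<partial>NN 1) \<le> (\<integral>x. gg e x a k \<partial>NN 1)"
      using x2i G(1) coerc_pt[OF k] by (intro integral_mono) auto
    moreover have "(\<integral>x. k\<^sup>2 * ?f a / 2 - x\<^sup>2 \<partial>NN 1) = k\<^sup>2 * ?f a / 2 - 1"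
      using x2i NN_moment2[of 1] p1 by (simp add: Bochner_Integration.integral_diff)
    ultimately show ?thesis by simp
  qed
  have "(\<integral>a. k\<^sup>2 * ?f a / 2 - 1 \<partial>NN sg) \<le> FF sg e k"
    unfolding FF_def using fi G(3) inner by (intro integral_mono) auto
  moreover have "(\<integral>a. k\<^sup>2 * ?f a / 2 - 1 \<partial>NN sg) = k\<^sup>2 * (\<integral>a. ?f a \<partial>NN sg) / 2 - 1"
    using fi p1 by (simp add: Bochner_Integration.integral_diff)
  ultimately show ?thesis by simp
qed

end


lemma gg_psi: "gg e x a k = (max 0 (\<bar>x - k * a\<bar> - e * k))\<^sup>2"
proof -
  have "max (x - k * (a + e)) (k * (a - e) - x) = \<bar>x - k * a\<bar> - e * k"
    by (simp add: abs_if max_def algebra_simps)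
  then show ?thesis unfolding gg_def hh_def by simp
qed

lemma nd_scale:
  assumes k: "k > 0" and sg: "sg > 0"
  shows "(1 / k) * normal_density 0 sg (- w / k) = normal_density 0 (k * sg) w"
proof -
  have "(- w / k)\<^sup>2 / (2 * sg\<^sup>2) = w\<^sup>2 / (2 * (k * sg)\<^sup>2)"
    using k sg by (simp add: power2_eq_square field_simps)
  moreover have "1 / k / sqrt (2 * pi * sg\<^sup>2) = 1 / sqrt (2 * pi * (k * sg)\<^sup>2)"
  proof -
    have "sqrt (2 * pi * (k * sg)\<^sup>2) = k * sqrt (2 * pi * sg\<^sup>2)"
      using k by (simp add: power_mult_distrib real_sqrt_mult)
    then show ?thesis using k by simp
  qed
  ultimately show ?thesis unfolding normal_density_def by simp
qed

lemma conv_step: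
  fixes \<psi> :: "real \<Rightarrow> real"
  assumes k: "k > 0" and sg: "sg > 0" and [measurable]: "\<psi> \<in> borel_measurable borel" and nn: "\<And>u. \<psi> u \<ge> 0"
  shows "(\<integral>\<^sup>+a. ennreal (normal_density 0 sg a) * (\<integral>\<^sup>+x. ennreal (normal_density 0 1 x * \<psi> (x - k * a)) \<partial>lborel) \<partial>lborel)
     = (\<integral>\<^sup>+u. ennreal (normal_density 0 (sqrt (1 + (k * sg)\<^sup>2)) u * \<psi> u) \<partial>lborel)"
proof -
  have A: "(\<integral>\<^sup>+x. ennreal (normal_density 0 1 x * \<psi> (x - k * a)) \<partial>lborel) =
           (\<integral>\<^sup>+u. ennreal (normal_density 0 1 (k * a + u) * \<psi> u) \<partial>lborel)" for a
    by (subst nn_integral_real_affine[where c=1 and t="k * a"]) auto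
  have B: "(\<integral>\<^sup>+a. ennreal (normal_density 0 sg a * normal_density 0 1 (k * a + u)) \<partial>lborel) =
           ennreal (normal_density 0 (sqrt (1 + (k * sg)\<^sup>2)) u)" for u
  proof -
    have "(\<integral>\<^sup>+a. ennreal (normal_density 0 sg a * normal_density 0 1 (k * a + u)) \<partial>lborel) =
        ennreal (1 / k) * (\<integral>\<^sup>+w. ennreal (normal_density 0 sg (- w / k) * normal_density 0 1 (u - w)) \<partial>lborel)"
      using k by (subst nn_integral_real_affine[where c="- 1 / k" and t=0]) (auto simp: algebra_simps)
    also have "\<dots> = (\<integral>\<^sup>+w. ennreal (1 / k) * ennreal (normal_density 0 sg (- w / k) * normal_density 0 1 (u - w)) \<partial>lborel)"
      by (rule nn_integral_cmult[symmetric]) measurable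
    also have "\<dots> = (\<integral>\<^sup>+w. ennreal (normal_density 0 1 (u - w) * normal_density 0 (k * sg) w) \<partial>lborel)"
    proof (rule nn_integral_cong)
      fix w
      have "ennreal (1 / k) * ennreal (normal_density 0 sg (- w / k) * normal_density 0 1 (u - w)) =
            ennreal ((1 / k) * normal_density 0 sg (- w / k) * normal_density 0 1 (u - w))"
        using k by (simp add: ennreal_mult[symmetric] mult.assoc)
      also have "\<dots> = ennreal (normal_density 0 1 (u - w) * normal_density 0 (k * sg) w)"
        using nd_scale[OF k sg, of w] by (simp add: mult.commute)
      finally show "ennreal (1 / k) * ennreal (normal_density 0 sg (- w / k) * normal_density 0 1 (u - w)) =
            ennreal (normal_density 0 1 (u - w) * normal_density 0 (k * sg) w)" .
    qed
    also have "\<dots> = ennreal (normal_density 0 (sqrt (1\<^sup>2 + (k * sg)\<^sup>2)) u)"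
      using fun_cong[OF conv_normal_density_zero_mean[of 1 "k * sg"], of u] k sg by simp
    finally show ?thesis by simp
  qed
  have "(\<integral>\<^sup>+a. ennreal (normal_density 0 sg a) * (\<integral>\<^sup>+x. ennreal (normal_density 0 1 x * \<psi> (x - k * a)) \<partial>lborel) \<partial>lborel)
      = (\<integral>\<^sup>+a. (\<integral>\<^sup>+u. ennreal (normal_density 0 sg a) * ennreal (normal_density 0 1 (k * a + u) * \<psi> u) \<partial>lborel) \<partial>lborel)"
    unfolding A by (intro nn_integral_cong nn_integral_cmult[symmetric]) measurable
  also have "\<dots> = (\<integral>\<^sup>+a. (\<integral>\<^sup>+u. ennreal (normal_density 0 sg a * normal_density 0 1 (k * a + u) * \<psi> u) \<partial>lborel) \<partial>lborel)"
    using nn by (intro nn_integral_cong) (simp add: ennreal_mult[symmetric] mult.assoc)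
  also have "\<dots> = (\<integral>\<^sup>+u. (\<integral>\<^sup>+a. ennreal (normal_density 0 sg a * normal_density 0 1 (k * a + u) * \<psi> u) \<partial>lborel) \<partial>lborel)"
    by (rule lborel_pair.Fubini') measurable
  also have "\<dots> = (\<integral>\<^sup>+u. ennreal (\<psi> u) * (\<integral>\<^sup>+a. ennreal (normal_density 0 sg a * normal_density 0 1 (k * a + u)) \<partial>lborel) \<partial>lborel)"
  proof (rule nn_integral_cong)
    fix u
    have "(\<integral>\<^sup>+a. ennreal (normal_density 0 sg a * normal_density 0 1 (k * a + u) * \<psi> u) \<partial>lborel) =
          (\<integral>\<^sup>+a. ennreal (\<psi> u) * ennreal (normal_density 0 sg a * normal_density 0 1 (k * a + u)) \<partial>lborel)"
      using nn by (intro nn_integral_cong) (simp add: ennreal_mult[symmetric] mult.commute)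
    also have "\<dots> = ennreal (\<psi> u) * (\<integral>\<^sup>+a. ennreal (normal_density 0 sg a * normal_density 0 1 (k * a + u)) \<partial>lborel)"
      by (rule nn_integral_cmult) measurable
    finally show "(\<integral>\<^sup>+a. ennreal (normal_density 0 sg a * normal_density 0 1 (k * a + u) * \<psi> u) \<partial>lborel) =
          ennreal (\<psi> u) * (\<integral>\<^sup>+a. ennreal (normal_density 0 sg a * normal_density 0 1 (k * a + u)) \<partial>lborel)" .
  qed
  also have "\<dots> = (\<integral>\<^sup>+u. ennreal (normal_density 0 (sqrt (1 + (k * sg)\<^sup>2)) u * \<psi> u) \<partial>lborel)"
    using nn unfolding B by (intro nn_integral_cong) (simp add: ennreal_mult[symmetric] mult.commute)
  finally show ?thesis .
qed

lemma psi_int: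
  assumes s: "s > 0" and b: "b \<ge> 0"
  shows "integrable (NN s) (\<lambda>u. (max 0 (\<bar>u\<bar> - b))\<^sup>2)"
proof (rule integrable_NN_growth[OF s _, where A=1])
  show "(\<lambda>u. (max 0 (\<bar>u\<bar> - b))\<^sup>2) \<in> borel_measurable borel" by measurable
  fix x :: real
  have "max 0 (\<bar>x\<bar> - b) \<le> \<bar>x\<bar>" using b by simp
  then have "(max 0 (\<bar>x\<bar> - b))\<^sup>2 \<le> \<bar>x\<bar>\<^sup>2" by (intro power_mono) auto
  then show "\<bar>(max 0 (\<bar>x\<bar> - b))\<^sup>2\<bar> \<le> 1 * (1 + x ^ 4)" using sq_le_1_4[of x] by simp
qed

context
  fixes sg e r :: real
  assumes sg: "sg > 0" and e: "e > 0" and r: "r > 0"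
begin

lemma FF_conv:
  assumes k: "k \<ge> 0"
  shows "FF sg e k = (\<integral>u. (max 0 (\<bar>u\<bar> - e * k))\<^sup>2 \<partial>NN (sqrt (1 + (k * sg)\<^sup>2)))"
proof (cases "k = 0")
  case True
  have "(max 0 \<bar>u\<bar>)\<^sup>2 = u\<^sup>2" for u :: real by simp
  then show ?thesis using True FF0[OF sg e r] NN_moment2[of 1] by simp
next
  case False
  then have kp: "k > 0" using k by simp
  define \<alpha> where "\<alpha> = sqrt (1 + (k * sg)\<^sup>2)"
  have ap: "\<alpha> > 0" unfolding \<alpha>_def by (simp add: add_pos_nonneg)
  define \<psi> where "\<psi> = (\<lambda>u::real. (max 0 (\<bar>u\<bar> - e * k))\<^sup>2)"
  have \<psi>m[measurable]: "\<psi> \<in> borel_measurable borel" unfolding \<psi>_def by measurable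
  have \<psi>nn: "\<And>u. \<psi> u \<ge> 0" unfolding \<psi>_def by simp
  have ggp: "gg e x a k = \<psi> (x - k * a)" for x a unfolding \<psi>_def gg_psi ..
  note G = gg_int[OF sg e r k]
  define m0 where "m0 = (\<lambda>a. \<integral>x. gg e x a k \<partial>NN 1)"
  have m0m[measurable]: "m0 \<in> borel_measurable borel" unfolding m0_def by (rule G(2))
  have m0nn: "m0 a \<ge> 0" for a unfolding m0_def by (intro integral_nonneg_AE) (auto simp: gg_nonneg)
  have m0e: "ennreal (m0 a) = (\<integral>\<^sup>+x. ennreal (normal_density 0 1 x * \<psi> (x - k * a)) \<partial>lborel)" for a
  proof -
    have gm: "(\<lambda>x. gg e x a k) \<in> borel_measurable borel" by measurable
    have i: "integrable lborel (\<lambda>x. normal_density 0 1 x * gg e x a k)"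
      using G(1)[of a] integrable_NN_iff[OF gm] by simp
    have "m0 a = (\<integral>x. normal_density 0 1 x * gg e x a k \<partial>lborel)"
      unfolding m0_def by (rule integral_NN[OF gm])
    then have "ennreal (m0 a) = (\<integral>\<^sup>+x. ennreal (normal_density 0 1 x * gg e x a k) \<partial>lborel)"
      using i by (simp add: nn_integral_eq_integral gg_nonneg)
    then show ?thesis by (simp add: ggp)
  qed
  have FFe: "ennreal (FF sg e k) = (\<integral>\<^sup>+a. ennreal (normal_density 0 sg a) * ennreal (m0 a) \<partial>lborel)"
  proof -
    have i: "integrable lborel (\<lambda>a. normal_density 0 sg a * m0 a)"
      using G(3) integrable_NN_iff[OF m0m] unfolding m0_def by simp
    have "FF sg e k = (\<integral>a. normal_density 0 sg a * m0 a \<partial>lborel)"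
      unfolding FF_def m0_def[symmetric] by (rule integral_NN[OF m0m])
    then have "ennreal (FF sg e k) = (\<integral>\<^sup>+a. ennreal (normal_density 0 sg a * m0 a) \<partial>lborel)"
      using i m0nn by (simp add: nn_integral_eq_integral)
    also have "\<dots> = (\<integral>\<^sup>+a. ennreal (normal_density 0 sg a) * ennreal (m0 a) \<partial>lborel)"
      by (intro nn_integral_cong) (simp add: ennreal_mult m0nn)
    finally show ?thesis .
  qed
  have Re: "ennreal (\<integral>u. \<psi> u \<partial>NN \<alpha>) = (\<integral>\<^sup>+u. ennreal (normal_density 0 \<alpha> u * \<psi> u) \<partial>lborel)"
  proof -
    have i: "integrable lborel (\<lambda>u. normal_density 0 \<alpha> u * \<psi> u)"
      using psi_int[OF ap, of "e * k"] integrable_NN_iff[OF \<psi>m] e k unfolding \<psi>_def by simp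
    show ?thesis using i \<psi>nn by (simp add: integral_NN nn_integral_eq_integral)
  qed
  have "ennreal (FF sg e k) = (\<integral>\<^sup>+a. ennreal (normal_density 0 sg a) * (\<integral>\<^sup>+x. ennreal (normal_density 0 1 x * \<psi> (x - k * a)) \<partial>lborel) \<partial>lborel)"
    unfolding FFe m0e ..
  also have "\<dots> = (\<integral>\<^sup>+u. ennreal (normal_density 0 \<alpha> u * \<psi> u) \<partial>lborel)"
    unfolding \<alpha>_def by (rule conv_step[OF kp sg \<psi>m \<psi>nn])
  also have "\<dots> = ennreal (\<integral>u. \<psi> u \<partial>NN \<alpha>)" by (rule Re[symmetric])
  finally have "ennreal (FF sg e k) = ennreal (\<integral>u. \<psi> u \<partial>NN \<alpha>)" .
  moreover have "FF sg e k \<ge> 0" using FFe m0nn unfolding FF_def m0_def[symmetric]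
    by (intro integral_nonneg_AE) (auto simp: m0nn)
  moreover have "(\<integral>u. \<psi> u \<partial>NN \<alpha>) \<ge> 0" by (intro integral_nonneg_AE) (auto simp: \<psi>nn)
  ultimately show ?thesis unfolding \<psi>_def \<alpha>_def by simp
qed

end

lemma nd_scale2:
  assumes a: "\<alpha> > 0"
  shows "\<alpha> * normal_density 0 \<alpha> (\<alpha> * z) = std_normal_density z"
proof -
  have e1: "(\<alpha> * z - 0)\<^sup>2 / (2 * \<alpha>\<^sup>2) = (z - 0)\<^sup>2 / (2 * 1\<^sup>2)" using a by (simp add: power2_eq_square field_simps)
  have e2: "\<alpha> / sqrt (2 * pi * \<alpha>\<^sup>2) = 1 / sqrt (2 * pi * 1\<^sup>2)"
    using a by (simp add: real_sqrt_mult field_simps)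
  have "\<alpha> * normal_density 0 \<alpha> (\<alpha> * z) = (\<alpha> / sqrt (2 * pi * \<alpha>\<^sup>2)) * exp (-(\<alpha> * z - 0)\<^sup>2 / (2 * \<alpha>\<^sup>2))"
    unfolding normal_density_def by simp
  also have "\<dots> = (1 / sqrt (2 * pi * 1\<^sup>2)) * exp (-(z - 0)\<^sup>2 / (2 * 1\<^sup>2))"
    using e1 e2 by (simp only: minus_divide_left[symmetric])
  also have "\<dots> = std_normal_density z" unfolding normal_density_def by simp
  finally show ?thesis .
qed

lemma psi_half:
  assumes a: "\<alpha> > 0" and b: "b \<ge> 0"
  shows "(\<integral>u. (max 0 (\<bar>u\<bar> - b))\<^sup>2 \<partial>NN \<alpha>) =
         2 * (LINT z:{b / \<alpha>..}|lborel. std_normal_density z * (\<alpha> * z - b)\<^sup>2)"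
proof -
  define g where "g = (\<lambda>z::real. std_normal_density z * (max 0 (\<alpha> * \<bar>z\<bar> - b))\<^sup>2)"
  have gm[measurable]: "g \<in> borel_measurable borel" unfolding g_def by measurable
  have "(\<integral>u. (max 0 (\<bar>u\<bar> - b))\<^sup>2 \<partial>NN \<alpha>) = (\<integral>u. normal_density 0 \<alpha> u * (max 0 (\<bar>u\<bar> - b))\<^sup>2 \<partial>lborel)"
    by (rule integral_NN) measurable
  also have "\<dots> = \<alpha> * (\<integral>z. normal_density 0 \<alpha> (0 + \<alpha> * z) * (max 0 (\<bar>0 + \<alpha> * z\<bar> - b))\<^sup>2 \<partial>lborel)"
    using lborel_integral_real_affine[of \<alpha> "\<lambda>u. normal_density 0 \<alpha> u * (max 0 (\<bar>u\<bar> - b))\<^sup>2" 0] a by simp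
  also have "\<dots> = (\<integral>z. g z \<partial>lborel)"
  proof -
    have "\<alpha> * (normal_density 0 \<alpha> (0 + \<alpha> * z) * (max 0 (\<bar>0 + \<alpha> * z\<bar> - b))\<^sup>2) = g z" for z
      using nd_scale2[OF a, of z] a unfolding g_def by (simp add: abs_mult)
    then show ?thesis by (simp flip: integral_mult_right_zero)
  qed
  also have "\<dots> = 2 * (LINT z:{b / \<alpha>..}|lborel. std_normal_density z * (\<alpha> * z - b)\<^sup>2)"
  proof -
    define h where "h = (\<lambda>z::real. std_normal_density z * (\<alpha> * z - b)\<^sup>2)"
    have hm[measurable]: "h \<in> borel_measurable borel" unfolding h_def by measurable
    have hi: "integrable lborel h"
    proof -
      have "integrable (NN 1) (\<lambda>z. (\<alpha> * z - b)\<^sup>2)"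
      proof (rule integrable_NN_growth[where A="2 * \<alpha>\<^sup>2 + 2 * b\<^sup>2"])
        fix z :: real
        have "(\<alpha> * z - b)\<^sup>2 \<le> 2 * (\<alpha> * z)\<^sup>2 + 2 * b\<^sup>2"
        proof -
          have "2 * (\<alpha> * z)\<^sup>2 + 2 * b\<^sup>2 - (\<alpha> * z - b)\<^sup>2 = (\<alpha> * z + b)\<^sup>2" by (simp add: power2_eq_square algebra_simps)
          moreover have "(\<alpha> * z + b)\<^sup>2 \<ge> 0" by simp
          ultimately show ?thesis by linarith
        qed
        also have "\<dots> = 2 * \<alpha>\<^sup>2 * z\<^sup>2 + 2 * b\<^sup>2" by (simp add: power_mult_distrib)
        also have "\<dots> \<le> 2 * \<alpha>\<^sup>2 * (1 + z ^ 4) + 2 * b\<^sup>2 * (1 + z ^ 4)"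
        proof -
          have z4: "z ^ 4 \<ge> 0" by (simp add: zero_le_even_power)
          have "2 * \<alpha>\<^sup>2 * z\<^sup>2 \<le> 2 * \<alpha>\<^sup>2 * (1 + z ^ 4)" using sq_le_1_4[of z] by (intro mult_left_mono) auto
          moreover have "2 * b\<^sup>2 * 1 \<le> 2 * b\<^sup>2 * (1 + z ^ 4)" using z4 by (intro mult_left_mono) auto
          ultimately show ?thesis by simp
        qed
        finally show "\<bar>(\<alpha> * z - b)\<^sup>2\<bar> \<le> (2 * \<alpha>\<^sup>2 + 2 * b\<^sup>2) * (1 + z ^ 4)" by (simp add: algebra_simps)
      qed (auto)
      then show ?thesis unfolding h_def by (subst (asm) integrable_NN_iff) auto
    qed
    have eqi: "indicator {0..} z *\<^sub>R g z = indicator {b / \<alpha>..} z *\<^sub>R h z" for z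
    proof (cases "z \<ge> b / \<alpha>")
      case True
      then have "\<alpha> * z \<ge> b" using a by (simp add: divide_le_eq mult.commute)
      moreover have "z \<ge> 0" using True a b by (meson order_trans divide_nonneg_pos less_le)
      ultimately show ?thesis using True by (simp add: g_def h_def indicator_def)
    next
      case False
      then have "\<alpha> * z < b" using a by (simp add: not_le pos_less_divide_eq mult.commute)
      then have "z \<ge> 0 \<Longrightarrow> max 0 (\<alpha> * \<bar>z\<bar> - b) = 0" by simp
      then show ?thesis using False by (simp add: g_def h_def indicator_def)
    qed
    have hb: "has_bochner_integral lborel (\<lambda>z. indicator {b / \<alpha>..} z *\<^sub>R h z) (LINT z:{b / \<alpha>..}|lborel. h z)"
      unfolding set_lebesgue_integral_def
      by (rule has_bochner_integral_integrable) (rule integrable_mult_indicator[OF _ hi], simp)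
    have "has_bochner_integral lborel g (2 *\<^sub>R (LINT z:{b / \<alpha>..}|lborel. h z))"
    proof (rule has_bochner_integral_even_function)
      show "has_bochner_integral lborel (\<lambda>x. indicator {0..} x *\<^sub>R g x) (LINT z:{b / \<alpha>..}|lborel. h z)"
        using hb by (simp only: eqi)
      show "g (- x) = g x" for x unfolding g_def by (simp add: normal_density_def)
    qed
    then show ?thesis unfolding h_def by (simp add: has_bochner_integral_iff)
  qed
  finally show ?thesis .
qed


context
  fixes sg e r :: real
  assumes sg: "sg > 0" and e: "e > 0" and r: "r > 0"
begin

lemma replica_eq:
  assumes t: "tau \<ge> 0"
  shows "replica_fun r sg e tau = FF sg e (tau / r)"
proof -
  have k: "tau / r \<ge> 0" using t r by simp
  have a: "sqrt (1 + (tau / r * sg)\<^sup>2) > 0" by (simp add: add_pos_nonneg)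
  have b: "e * (tau / r) \<ge> 0" using e k by (intro mult_nonneg_nonneg) auto
  have "FF sg e (tau / r) = 2 * (LINT z:{e * (tau / r) / sqrt (1 + (tau / r * sg)\<^sup>2)..}|lborel.
          std_normal_density z * (sqrt (1 + (tau / r * sg)\<^sup>2) * z - e * (tau / r))\<^sup>2)"
    using FF_conv[OF sg e r k] psi_half[OF a b] by simp
  moreover have "(tau / r * sg)\<^sup>2 = sg\<^sup>2 * tau\<^sup>2 / r\<^sup>2" by (simp add: power_mult_distrib power_divide)
  moreover have "e * (tau / r) = e * tau / r" by simp
  ultimately show ?thesis unfolding replica_fun_def Let_def by simp
qed

lemma FF_cont: "K \<ge> 0 \<Longrightarrow> continuous_on {0..K} (FF sg e)"
proof -
  assume K: "K \<ge> 0"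
  have "(\<bar>LL sg e K\<bar>)-lipschitz_on {0..K} (FF sg e)"
  proof (rule lipschitz_onI)
    fix x y assume "x \<in> {0..K}" "y \<in> {0..K}"
    then have "\<bar>FF sg e x - FF sg e y\<bar> \<le> \<bar>x - y\<bar> * LL sg e K" using FF_lip[OF sg e r] by auto
    also have "\<dots> \<le> \<bar>LL sg e K\<bar> * \<bar>x - y\<bar>" by (simp add: mult.commute mult_left_mono)
    finally show "dist (FF sg e x) (FF sg e y) \<le> \<bar>LL sg e K\<bar> * dist x y" by (simp add: dist_real_def)
  qed simp
  then show ?thesis by (rule lipschitz_on_continuous_on)
qed

lemma FF_big: "\<exists>R>0. \<forall>k\<ge>R. FF sg e k \<ge> FF sg e 0 + 1"
proof -
  define c0 where "c0 = (\<integral>a. (max 0 (\<bar>a\<bar> - e))\<^sup>2 \<partial>NN sg)"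
  have c0: "c0 > 0" unfolding c0_def by (rule rho_pos[OF sg e])
  define R where "R = sqrt (6 / c0)"
  have R: "R > 0" unfolding R_def using c0 by simp
  have "FF sg e k \<ge> FF sg e 0 + 1" if k: "k \<ge> R" for k
  proof -
    have "R\<^sup>2 = 6 / c0" unfolding R_def using c0 by simp
    moreover have "R\<^sup>2 \<le> k\<^sup>2" using k R by (intro power_mono) auto
    ultimately have "6 / c0 \<le> k\<^sup>2" by simp
    then have "6 \<le> k\<^sup>2 * c0" using c0 by (simp add: divide_le_eq)
    moreover have "FF sg e k \<ge> k\<^sup>2 * c0 / 2 - 1" unfolding c0_def using FF_coerc[OF sg e r] k R by simp
    ultimately show ?thesis using FF0[OF sg e r] by simp
  qed
  then show ?thesis using R by blast
qed

lemma FF_min: "\<exists>k0\<ge>0. \<forall>k\<ge>0. FF sg e k0 \<le> FF sg e k"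
proof -
  obtain R where R: "R > 0" "\<And>k. k \<ge> R \<Longrightarrow> FF sg e k \<ge> FF sg e 0 + 1" using FF_big by blast
  obtain k0 where k0: "k0 \<in> {0..R}" "\<And>y. y \<in> {0..R} \<Longrightarrow> FF sg e k0 \<le> FF sg e y"
    using continuous_attains_inf[OF compact_Icc _ FF_cont[of R]] R by auto
  have "FF sg e k0 \<le> FF sg e k" if "k \<ge> 0" for k
  proof (cases "k \<le> R")
    case True then show ?thesis using k0 that by auto
  next
    case False
    then have "FF sg e k \<ge> FF sg e 0 + 1" using R by auto
    moreover have "FF sg e k0 \<le> FF sg e 0" using k0(2)[of 0] R by auto
    ultimately show ?thesis by simp
  qed
  then show ?thesis using k0 by auto
qed

lemma FF_nonneg: "k \<ge> 0 \<Longrightarrow> FF sg e k \<ge> 0"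
  unfolding FF_def by (intro integral_nonneg_AE AE_I2 integral_nonneg_AE) (auto simp: gg_nonneg)

lemma lower_eventually:
  assumes k0: "k0 \<ge> 0" "\<And>k. k \<ge> 0 \<Longrightarrow> FF sg e k0 \<le> FF sg e k"
    and eta: "eta > 0"
  shows "\<exists>N. \<forall>P\<ge>N. mean_alpha_inv r sg e P \<ge> FF sg e k0 - eta"
proof -
  define M where "M = FF sg e k0"
  obtain R where R: "R > 0" "\<And>k. k \<ge> R \<Longrightarrow> FF sg e k \<ge> FF sg e 0 + 1" using FF_big by blast
  define K where "K = R + 3"
  define L where "L = \<bar>LL sg e K\<bar> + 1"
  have L: "L > 0" unfolding L_def by simp
  define et where "et = eta / 2"
  have et: "et > 0" using eta by (simp add: et_def)
  define h where "h = min 1 (et / (4 * L))"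
  have h: "h > 0" "h \<le> 1" "h \<le> et / (4 * L)" using et L by (auto simp: h_def)
  define n where "n = nat \<lceil>R / h\<rceil> + 2"
  have n2: "n \<ge> 2" by (simp add: n_def)
  have cR: "R / h \<le> of_int \<lceil>R / h\<rceil>" "of_int \<lceil>R / h\<rceil> < R / h + 1" by linarith+
  have rn: "real n = of_int \<lceil>R / h\<rceil> + 2"
  proof -
    have rh: "R / h > 0" using R h by simp
    have "\<lceil>R / h\<rceil> \<ge> 0" by (subst zero_le_ceiling) (use rh in linarith)
    then show ?thesis by (simp add: n_def)
  qed
  have nhR: "real n * h \<ge> R"
  proof -
    have "R / h \<le> real n" using cR rn by linarith
    then show ?thesis using h by (simp add: divide_le_eq)
  qed
  have nhK: "real n * h \<le> K"
  proof -
    have "real n < R / h + 3" using cR rn by linarith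
    then have "real n * h < (R / h + 3) * h" using h by (simp add: mult_strict_right_mono)
    also have "\<dots> = R + 3 * h" using h by (simp add: field_simps)
    also have "\<dots> \<le> K" using h by (simp add: K_def)
    finally show ?thesis by simp
  qed
  define d where "d = min (1 / 2) (et / 4)"
  have d: "d > 0" "d \<le> 1 / 2" "d \<le> et / 4" using et by (auto simp: d_def)
  define D where "D = L * h"
  have endF: "FF sg e (real n * h) \<ge> FF sg e 0 + 2 * d" using R(2)[OF nhR] d by simp
  have DF: "\<bar>FF sg e (real (Suc i) * h) - FF sg e (real i * h)\<bar> \<le> D" if i: "i < n" for i
  proof -
    have hi: "real (Suc i) * h \<le> real n * h" using i h by (intro mult_right_mono) auto
    have "\<bar>FF sg e (real (Suc i) * h) - FF sg e (real i * h)\<bar> \<le> \<bar>real (Suc i) * h - real i * h\<bar> * LL sg e K"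
    proof -
      have hi2: "real i * h \<le> real (Suc i) * h" using h by (intro mult_right_mono) auto
      have b1: "real (Suc i) * h \<le> K" using hi nhK by linarith
      have b2: "real i * h \<le> K" using hi2 b1 by linarith
      have b0: "0 \<le> real (Suc i) * h" "0 \<le> real i * h" using h by auto
      show ?thesis by (rule FF_lip[OF sg e r b0(1) b1 b0(2) b2])
    qed
    also have "\<bar>real (Suc i) * h - real i * h\<bar> = h" using h by (simp add: algebra_simps)
    also have "h * LL sg e K \<le> h * L" using h by (intro mult_left_mono) (auto simp: L_def)
    finally show ?thesis by (simp add: D_def mult.commute)
  qed
  have mF: "M \<le> FF sg e (real i * h)" for i using k0(2)[of "real i * h"] h by (simp add: M_def)
  define c where "c = M - D - 3 * d"
  define SV where "SV = (\<bar>c\<bar> / d\<^sup>2) * (\<Sum>i\<in>{..n}. VV sg e (real i * h))"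
  have low: "mean_alpha_inv r sg e P \<ge> c - SV / real P" if "P \<ge> 1" for P
    using lower[OF sg e r h(1) n2 d(1) endF DF, of M P] mF that unfolding c_def SV_def by (simp add: M_def)
  have cM: "c \<ge> M - et"
  proof -
    have "D \<le> L * (et / (4 * L))" unfolding D_def using h L by (intro mult_left_mono) auto
    also have "\<dots> = et / 4" using L by simp
    finally show ?thesis unfolding c_def using d by simp
  qed
  obtain N where N: "real N > \<bar>SV\<bar> / et" using reals_Archimedean2 by blast
  have "mean_alpha_inv r sg e P \<ge> M - eta" if P: "P \<ge> Suc N" for P
  proof -
    have Pp: "real P > 0" "real P > \<bar>SV\<bar> / et" using P N by auto
    have "\<bar>SV\<bar> < et * real P" using Pp et by (simp add: divide_less_eq mult.commute)
    then have "SV / real P \<le> et" using Pp by (simp add: divide_le_eq mult.commute)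
    then show ?thesis using low[of P] P cM by (simp add: et_def)
  qed
  then show ?thesis unfolding M_def by blast
qed

end

theorem theorem3:
  fixes r sg eps :: real
  assumes "r > 0" and "sg > 0" and "eps > 0"
  shows "\<exists>tau0 \<ge> 0. (\<forall>tau \<ge> 0. replica_fun r sg eps tau0 \<le> replica_fun r sg eps tau)
           \<and> (\<lambda>P. mean_alpha_inv r sg eps P) \<longlonglongrightarrow> replica_fun r sg eps tau0"
proof -
  note r = assms(1) and sg = assms(2) and e = assms(3)
  obtain k0 where k0: "k0 \<ge> 0" "\<And>k. k \<ge> 0 \<Longrightarrow> FF sg eps k0 \<le> FF sg eps k"
    using FF_min[OF sg e r] by blast
  define tau0 where "tau0 = r * k0"
  have t0: "tau0 \<ge> 0" using r k0 by (simp add: tau0_def)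
  have rt0: "replica_fun r sg eps tau0 = FF sg eps k0"
    using replica_eq[OF sg e r t0] r by (simp add: tau0_def)
  have minim: "\<forall>tau \<ge> 0. replica_fun r sg eps tau0 \<le> replica_fun r sg eps tau"
  proof (intro allI impI)
    fix tau :: real assume t: "tau \<ge> 0"
    have "tau / r \<ge> 0" using t r by simp
    then show "replica_fun r sg eps tau0 \<le> replica_fun r sg eps tau"
      unfolding rt0 replica_eq[OF sg e r t] by (rule k0(2))
  qed
  have lim: "(\<lambda>P. mean_alpha_inv r sg eps P) \<longlonglongrightarrow> FF sg eps k0"
  proof (rule LIMSEQ_I)
    fix eta :: real assume eta: "eta > 0"
    obtain N where N: "\<And>P. P \<ge> N \<Longrightarrow> mean_alpha_inv r sg eps P \<ge> FF sg eps k0 - eta / 2"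
      using lower_eventually[OF sg e r k0, of "eta / 2"] eta by auto
    have "norm (mean_alpha_inv r sg eps P - FF sg eps k0) < eta" if "P \<ge> N" for P
    proof -
      have "mean_alpha_inv r sg eps P \<le> FF sg eps k0" by (rule upper[OF sg e r k0(1)])
      then show ?thesis using N[OF that] eta by simp
    qed
    then show "\<exists>no. \<forall>n\<ge>no. norm (mean_alpha_inv r sg eps n - FF sg eps k0) < eta" by blast
  qed
  show ?thesis using t0 minim lim rt0 by auto
qed


end
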